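(* A sequent $\Gamma\vdash M$ is provable in system $\mathcal S$ if and only if it is provable in system $\mathcal L$.
   Context: Fix countably infinite sets of names and variables and the constructors $\mathsf{pub}$ (unary) and $\mathsf{sign},\mathsf{blind},\langle\cdot,\cdot\rangle,\{\cdot\}_{\cdot}$ (binary). Let $E$ be an equational theory whose signature $\Sigma_E$ is disjoint from the constructors, containing at most one associative-commutative (AC) binary symbol $\oplus$, presented by a rewrite system $R_E$ terminating and confluent modulo AC of $\oplus$. Terms: names, variables, $\mathsf{pub}(M)$, $\mathsf{sign}(M,N)$, $\mathsf{blind}(M,N)$, $\langle M,N\rangle$, $\{M\}_N$, $g(M_1,\dots,M_j)$ with $g\in\Sigma_E$; all ground. $\equiv$ is equality modulo AC, $\approx_E$ equality modulo $E$. A term is guarded if it is a name, a variable, or headed by a constructor. An $E$-context is a term with holes built only from symbols of $\Sigma_E$. Sequents $\Gamma\vdash M$ ($\Gamma$ a finite set of terms) have all terms in $R_E$-normal form modulo AC; $\Gamma,M$ means $\Gamma\cup\{M\}$. System $\mathcal S$: (id) $\Gamma\vdash M$ with no premise if $M\approx_E C[M_1,\dots,M_k]$ for an $E$-context $C$ and $M_i\in\Gamma$; (cut) from $\Gamma\vdash M$, $\Gamma,M\vdash T$ infer $\Gamma\vdash T$; ($p_L$) from $\Gamma,\langle M,N\rangle,M,N\vdash T$ infer $\Gamma,\langle M,N\rangle\vdash T$; ($p_R$) from $\Gamma\vdash M$, $\Gamma\vdash N$ infer $\Gamma\vdash\langle M,N\rangle$; ($e_L$) from $\Gamma,\{M\}_K\vdash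 K$ and $\Gamma,\{M\}_K,M,K\vdash N$ infer $\Gamma,\{M\}_K\vdash N$; ($e_R$) from $\Gamma\vdash M$, $\Gamma\vdash K$ infer $\Gamma\vdash\{M\}_K$; ($\mathsf{sign}_L$) from $\Gamma,\mathsf{sign}(M,K),\mathsf{pub}(L),M\vdash N$ infer $\Gamma,\mathsf{sign}(M,K),\mathsf{pub}(L)\vdash N$ provided $K\equiv L$; ($\mathsf{sign}_R$) from $\Gamma\vdash M$, $\Gamma\vdash K$ infer $\Gamma\vdash\mathsf{sign}(M,K)$; ($\mathsf{blind}_{L1}$) from $\Gamma,\mathsf{blind}(M,K)\vdash K$ and $\Gamma,\mathsf{blind}(M,K),M,K\vdash N$ infer $\Gamma,\mathsf{blind}(M,K)\vdash N$; ($\mathsf{blind}_R$) from $\Gamma\vdash M$, $\Gamma\vdash K$ infer $\Gamma\vdash\mathsf{blind}(M,K)$; ($\mathsf{blind}_{L2}$) from $\Gamma,\mathsf{sign}(\mathsf{blind}(M,R),K)\vdash R$ and $\Gamma,\mathsf{sign}(\mathsf{blind}(M,R),K),\mathsf{sign}(M,K),R\vdash N$ infer $\Gamma,\mathsf{sign}(\mathsf{blind}(M,R),K)\vdash N$; ($gs$) from $\Gamma\vdash A$, $\Gamma,A\vdash M$ infer $\Gamma\vdash M$, provided $A$ is a guarded subterm of a term in $\Gamma\cup\{M\}$. $\Gamma\Vdash_{\mathcal R}M$ means $\Gamma\vdash M$ is derivable in $\mathcal S$ using only (id), $p_R,e_R,\mathsf{sign}_R,\mathsf{blind}_R$. System $\mathcal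 L$: ($r$) $\Gamma\vdash M$ with no premise if $\Gamma\Vdash_{\mathcal R}M$; ($lp$) from $\Gamma,\langle M,N\rangle,M,N\vdash T$ infer $\Gamma,\langle M,N\rangle\vdash T$; ($le$) from $\Gamma,\{M\}_K,M,K\vdash N$ infer $\Gamma,\{M\}_K\vdash N$ provided $\Gamma,\{M\}_K\Vdash_{\mathcal R}K$; ($\mathsf{sign}$) from $\Gamma,\mathsf{sign}(M,K),\mathsf{pub}(L),M\vdash N$ infer $\Gamma,\mathsf{sign}(M,K),\mathsf{pub}(L)\vdash N$ provided $K\equiv L$; ($\mathsf{blind}_1$) from $\Gamma,\mathsf{blind}(M,K),M,K\vdash N$ infer $\Gamma,\mathsf{blind}(M,K)\vdash N$ provided $\Gamma,\mathsf{blind}(M,K)\Vdash_{\mathcal R}K$; ($\mathsf{blind}_2$) from $\Gamma,\mathsf{sign}(\mathsf{blind}(M,R),K),\mathsf{sign}(M,K),R\vdash N$ infer $\Gamma,\mathsf{sign}(\mathsf{blind}(M,R),K)\vdash N$ provided $\Gamma,\mathsf{sign}(\mathsf{blind}(M,R),K)\Vdash_{\mathcal R}R$; ($ls$) from $\Gamma,A\vdash M$ infer $\Gamma\vdash M$ provided $A$ is a guarded subterm of a term in $\Gamma\cup\{M\}$ and $\Gamma\Vdash_{\mathcal R}A$. *)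

theory Defs
  imports Main
begin

text \<open>Names and variables are drawn from countably infinite sets (here nat);
 'f is the signature Sigma_E of the equational theory (disjoint from the constructors
 by construction of the datatype).\<close>

datatype 'f trm =
    Name nat
  | Var nat
  | Pub "'f trm"
  | Sign "'f trm" "'f trm"
  | Blind "'f trm" "'f trm"
  | Pair "'f trm" "'f trm"
  | Enc "'f trm" "'f trm"
  | Fn 'f "'f trm list"

text \<open>Open terms over Sigma_E, used for the rewrite rules of R_E (rule variables of type nat).\<close>
datatype 'f etrm = EV nat | EF 'f "'f etrm list"

fun inst :: "(nat \<Rightarrow> 'f trm) \<Rightarrow> 'f etrm \<Rightarrow> 'f trm" where
  "inst \<sigma> (EV x) = \<sigma> x"
| "inst \<sigma> (EF f ts) = Fn f (map (inst \<sigma>) ts)"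

fun evars :: "'f etrm \<Rightarrow> nat set" where
  "evars (EV x) = {x}"
| "evars (EF f ts) = \<Union> (set (map evars ts))"

inductive wf_trm :: "('f \<Rightarrow> nat) \<Rightarrow> 'f trm \<Rightarrow> bool" for ar where
  "wf_trm ar (Name n)"
| "wf_trm ar (Var v)"
| "wf_trm ar M \<Longrightarrow> wf_trm ar (Pub M)"
| "wf_trm ar M \<Longrightarrow> wf_trm ar N \<Longrightarrow> wf_trm ar (Sign M N)"
| "wf_trm ar M \<Longrightarrow> wf_trm ar N \<Longrightarrow> wf_trm ar (Blind M N)"
| "wf_trm ar M \<Longrightarrow> wf_trm ar N \<Longrightarrow> wf_trm ar (Pair M N)"
| "wf_trm ar M \<Longrightarrow> wf_trm ar N \<Longrightarrow> wf_trm ar (Enc M N)"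
| "length ts = ar f \<Longrightarrow> (\<forall>t\<in>set ts. wf_trm ar t) \<Longrightarrow> wf_trm ar (Fn f ts)"

inductive wf_etrm :: "('f \<Rightarrow> nat) \<Rightarrow> 'f etrm \<Rightarrow> bool" for ar where
  "wf_etrm ar (EV x)"
| "length ts = ar f \<Longrightarrow> (\<forall>t\<in>set ts. wf_etrm ar t) \<Longrightarrow> wf_etrm ar (EF f ts)"

inductive ctxt_cl :: "('f trm \<Rightarrow> 'f trm \<Rightarrow> bool) \<Rightarrow> 'f trm \<Rightarrow> 'f trm \<Rightarrow> bool" for S where
  base: "S s t \<Longrightarrow> ctxt_cl S s t"
| pub: "ctxt_cl S s t \<Longrightarrow> ctxt_cl S (Pub s) (Pub t)"
| sign1: "ctxt_cl S s t \<Longrightarrow> ctxt_cl S (Sign s u) (Sign t u)"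
| sign2: "ctxt_cl S s t \<Longrightarrow> ctxt_cl S (Sign u s) (Sign u t)"
| blind1: "ctxt_cl S s t \<Longrightarrow> ctxt_cl S (Blind s u) (Blind t u)"
| blind2: "ctxt_cl S s t \<Longrightarrow> ctxt_cl S (Blind u s) (Blind u t)"
| pair1: "ctxt_cl S s t \<Longrightarrow> ctxt_cl S (Pair s u) (Pair t u)"
| pair2: "ctxt_cl S s t \<Longrightarrow> ctxt_cl S (Pair u s) (Pair u t)"
| enc1: "ctxt_cl S s t \<Longrightarrow> ctxt_cl S (Enc s u) (Enc t u)"
| enc2: "ctxt_cl S s t \<Longrightarrow> ctxt_cl S (Enc u s) (Enc u t)"
| fn: "ctxt_cl S s t \<Longrightarrow> ctxt_cl S (Fn f (xs @ s # ys)) (Fn f (xs @ t # ys))"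

inductive ac_root :: "'f option \<Rightarrow> 'f trm \<Rightarrow> 'f trm \<Rightarrow> bool" for pl where
  assoc: "pl = Some p \<Longrightarrow> ac_root pl (Fn p [a, Fn p [b, c]]) (Fn p [Fn p [a, b], c])"
| assoc': "pl = Some p \<Longrightarrow> ac_root pl (Fn p [Fn p [a, b], c]) (Fn p [a, Fn p [b, c]])"
| comm: "pl = Some p \<Longrightarrow> ac_root pl (Fn p [a, b]) (Fn p [b, a])"

definition ac_eq :: "'f option \<Rightarrow> 'f trm \<Rightarrow> 'f trm \<Rightarrow> bool" where
  "ac_eq pl = (ctxt_cl (ac_root pl))\<^sup>*\<^sup>*"

inductive r_root :: "('f etrm \<times> 'f etrm) set \<Rightarrow> 'f trm \<Rightarrow> 'f trm \<Rightarrow> bool" for R where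
  "(l, r) \<in> R \<Longrightarrow> r_root R (inst \<sigma> l) (inst \<sigma> r)"

definition rstep :: "('f etrm \<times> 'f etrm) set \<Rightarrow> 'f trm \<Rightarrow> 'f trm \<Rightarrow> bool" where
  "rstep R = ctxt_cl (r_root R)"

definition rstep_ac :: "'f option \<Rightarrow> ('f etrm \<times> 'f etrm) set \<Rightarrow> 'f trm \<Rightarrow> 'f trm \<Rightarrow> bool" where
  "rstep_ac pl R s t \<longleftrightarrow> (\<exists>s' t'. ac_eq pl s s' \<and> rstep R s' t' \<and> ac_eq pl t' t)"

text \<open>Equality modulo E, where E is presented by R_E together with AC.\<close>
definition eqE :: "'f option \<Rightarrow> ('f etrm \<times> 'f etrm) set \<Rightarrow> 'f trm \<Rightarrow> 'f trm \<Rightarrow> bool" where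
  "eqE pl R = (\<lambda>s t. rstep R s t \<or> rstep R t s \<or> ctxt_cl (ac_root pl) s t)\<^sup>*\<^sup>*"

definition terminating_ac :: "('f \<Rightarrow> nat) \<Rightarrow> 'f option \<Rightarrow> ('f etrm \<times> 'f etrm) set \<Rightarrow> bool" where
  "terminating_ac ar pl R \<longleftrightarrow>
     \<not> (\<exists>f :: nat \<Rightarrow> 'f trm. wf_trm ar (f 0) \<and> (\<forall>i. rstep_ac pl R (f i) (f (Suc i))))"

definition confluent_ac :: "('f \<Rightarrow> nat) \<Rightarrow> 'f option \<Rightarrow> ('f etrm \<times> 'f etrm) set \<Rightarrow> bool" where
  "confluent_ac ar pl R \<longleftrightarrow>
     (\<forall>s t. wf_trm ar s \<longrightarrow> wf_trm ar t \<longrightarrow> eqE pl R s t \<longrightarrow>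
        (\<exists>s' t'. (rstep_ac pl R)\<^sup>*\<^sup>* s s' \<and> (rstep_ac pl R)\<^sup>*\<^sup>* t t' \<and> ac_eq pl s' t'))"

text \<open>Standing assumptions on the equational theory E = (arities, optional AC symbol, R_E).\<close>
definition good_theory :: "('f \<Rightarrow> nat) \<Rightarrow> 'f option \<Rightarrow> ('f etrm \<times> 'f etrm) set \<Rightarrow> bool" where
  "good_theory ar pl R \<longleftrightarrow>
     (\<forall>p. pl = Some p \<longrightarrow> ar p = 2) \<and>
     (\<forall>(l, r) \<in> R. wf_etrm ar l \<and> wf_etrm ar r \<and> (\<forall>x. l \<noteq> EV x) \<and> evars r \<subseteq> evars l) \<and>
     terminating_ac ar pl R \<and> confluent_ac ar pl R"

definition nf :: "('f \<Rightarrow> nat) \<Rightarrow> 'f option \<Rightarrow> ('f etrm \<times> 'f etrm) set \<Rightarrow> 'f trm \<Rightarrow> bool" where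
  "nf ar pl R t \<longleftrightarrow> wf_trm ar t \<and> \<not> (\<exists>u. rstep_ac pl R t u)"

definition seq_ok :: "('f \<Rightarrow> nat) \<Rightarrow> 'f option \<Rightarrow> ('f etrm \<times> 'f etrm) set \<Rightarrow> 'f trm set \<Rightarrow> 'f trm \<Rightarrow> bool" where
  "seq_ok ar pl R \<Gamma> M \<longleftrightarrow> finite \<Gamma> \<and> (\<forall>t\<in>\<Gamma>. nf ar pl R t) \<and> nf ar pl R M"

text \<open>Terms of the form C[M1,...,Mk] with C an E-context and Mi in Gamma.\<close>
inductive_set ectx :: "('f \<Rightarrow> nat) \<Rightarrow> 'f trm set \<Rightarrow> 'f trm set" for ar \<Gamma> where
  hole: "M \<in> \<Gamma> \<Longrightarrow> M \<in> ectx ar \<Gamma>"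
| fn: "length ts = ar f \<Longrightarrow> (\<forall>t\<in>set ts. t \<in> ectx ar \<Gamma>) \<Longrightarrow> Fn f ts \<in> ectx ar \<Gamma>"

inductive subterm :: "'f trm \<Rightarrow> 'f trm \<Rightarrow> bool" where
  refl: "subterm t t"
| pub: "subterm s t \<Longrightarrow> subterm s (Pub t)"
| sign1: "subterm s t \<Longrightarrow> subterm s (Sign t u)"
| sign2: "subterm s u \<Longrightarrow> subterm s (Sign t u)"
| blind1: "subterm s t \<Longrightarrow> subterm s (Blind t u)"
| blind2: "subterm s u \<Longrightarrow> subterm s (Blind t u)"
| pair1: "subterm s t \<Longrightarrow> subterm s (Pair t u)"
| pair2: "subterm s u \<Longrightarrow> subterm s (Pair t u)"
| enc1: "subterm s t \<Longrightarrow> subterm s (Enc t u)"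
| enc2: "subterm s u \<Longrightarrow> subterm s (Enc t u)"
| fn: "t \<in> set ts \<Longrightarrow> subterm s t \<Longrightarrow> subterm s (Fn f ts)"

fun guarded :: "'f trm \<Rightarrow> bool" where
  "guarded (Fn f ts) = False"
| "guarded _ = True"

inductive provS :: "('f \<Rightarrow> nat) \<Rightarrow> 'f option \<Rightarrow> ('f etrm \<times> 'f etrm) set \<Rightarrow> 'f trm set \<Rightarrow> 'f trm \<Rightarrow> bool"
  for ar pl R where
  idS: "seq_ok ar pl R \<Gamma> M \<Longrightarrow> C \<in> ectx ar \<Gamma> \<Longrightarrow> eqE pl R M C \<Longrightarrow> provS ar pl R \<Gamma> M"
| cut: "seq_ok ar pl R \<Gamma> T \<Longrightarrow> provS ar pl R \<Gamma> M \<Longrightarrow> provS ar pl R (insert M \<Gamma>) T \<Longrightarrow> provS ar pl R \<Gamma> T"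
| pL: "seq_ok ar pl R (insert (Pair M N) \<Gamma>) T \<Longrightarrow>
       provS ar pl R (insert (Pair M N) (insert M (insert N \<Gamma>))) T \<Longrightarrow>
       provS ar pl R (insert (Pair M N) \<Gamma>) T"
| pR: "seq_ok ar pl R \<Gamma> (Pair M N) \<Longrightarrow> provS ar pl R \<Gamma> M \<Longrightarrow> provS ar pl R \<Gamma> N \<Longrightarrow>
       provS ar pl R \<Gamma> (Pair M N)"
| eL: "seq_ok ar pl R (insert (Enc M K) \<Gamma>) N \<Longrightarrow>
       provS ar pl R (insert (Enc M K) \<Gamma>) K \<Longrightarrow>
       provS ar pl R (insert (Enc M K) (insert M (insert K \<Gamma>))) N \<Longrightarrow>
       provS ar pl R (insert (Enc M K) \<Gamma>) N"
| eR: "seq_ok ar pl R \<Gamma> (Enc M K) \<Longrightarrow> provS ar pl R \<Gamma> M \<Longrightarrow> provS ar pl R \<Gamma> K \<Longrightarrow>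
       provS ar pl R \<Gamma> (Enc M K)"
| signL: "seq_ok ar pl R (insert (Sign M K) (insert (Pub L) \<Gamma>)) N \<Longrightarrow> ac_eq pl K L \<Longrightarrow>
       provS ar pl R (insert (Sign M K) (insert (Pub L) (insert M \<Gamma>))) N \<Longrightarrow>
       provS ar pl R (insert (Sign M K) (insert (Pub L) \<Gamma>)) N"
| signR: "seq_ok ar pl R \<Gamma> (Sign M K) \<Longrightarrow> provS ar pl R \<Gamma> M \<Longrightarrow> provS ar pl R \<Gamma> K \<Longrightarrow>
       provS ar pl R \<Gamma> (Sign M K)"
| blindL1: "seq_ok ar pl R (insert (Blind M K) \<Gamma>) N \<Longrightarrow>
       provS ar pl R (insert (Blind M K) \<Gamma>) K \<Longrightarrow>
       provS ar pl R (insert (Blind M K) (insert M (insert K \<Gamma>))) N \<Longrightarrow>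
       provS ar pl R (insert (Blind M K) \<Gamma>) N"
| blindR: "seq_ok ar pl R \<Gamma> (Blind M K) \<Longrightarrow> provS ar pl R \<Gamma> M \<Longrightarrow> provS ar pl R \<Gamma> K \<Longrightarrow>
       provS ar pl R \<Gamma> (Blind M K)"
| blindL2: "seq_ok ar pl R (insert (Sign (Blind M Rr) K) \<Gamma>) N \<Longrightarrow>
       provS ar pl R (insert (Sign (Blind M Rr) K) \<Gamma>) Rr \<Longrightarrow>
       provS ar pl R (insert (Sign (Blind M Rr) K) (insert (Sign M K) (insert Rr \<Gamma>))) N \<Longrightarrow>
       provS ar pl R (insert (Sign (Blind M Rr) K) \<Gamma>) N"
| gs: "seq_ok ar pl R \<Gamma> M \<Longrightarrow> guarded A \<Longrightarrow> (\<exists>t\<in>insert M \<Gamma>. subterm A t) \<Longrightarrow>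
       provS ar pl R \<Gamma> A \<Longrightarrow> provS ar pl R (insert A \<Gamma>) M \<Longrightarrow> provS ar pl R \<Gamma> M"

inductive provR :: "('f \<Rightarrow> nat) \<Rightarrow> 'f option \<Rightarrow> ('f etrm \<times> 'f etrm) set \<Rightarrow> 'f trm set \<Rightarrow> 'f trm \<Rightarrow> bool"
  for ar pl R where
  idR: "seq_ok ar pl R \<Gamma> M \<Longrightarrow> C \<in> ectx ar \<Gamma> \<Longrightarrow> eqE pl R M C \<Longrightarrow> provR ar pl R \<Gamma> M"
| pR: "seq_ok ar pl R \<Gamma> (Pair M N) \<Longrightarrow> provR ar pl R \<Gamma> M \<Longrightarrow> provR ar pl R \<Gamma> N \<Longrightarrow>
       provR ar pl R \<Gamma> (Pair M N)"
| eR: "seq_ok ar pl R \<Gamma> (Enc M K) \<Longrightarrow> provR ar pl R \<Gamma> M \<Longrightarrow> provR ar pl R \<Gamma> K \<Longrightarrow>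
       provR ar pl R \<Gamma> (Enc M K)"
| signR: "seq_ok ar pl R \<Gamma> (Sign M K) \<Longrightarrow> provR ar pl R \<Gamma> M \<Longrightarrow> provR ar pl R \<Gamma> K \<Longrightarrow>
       provR ar pl R \<Gamma> (Sign M K)"
| blindR: "seq_ok ar pl R \<Gamma> (Blind M K) \<Longrightarrow> provR ar pl R \<Gamma> M \<Longrightarrow> provR ar pl R \<Gamma> K \<Longrightarrow>
       provR ar pl R \<Gamma> (Blind M K)"

inductive provL :: "('f \<Rightarrow> nat) \<Rightarrow> 'f option \<Rightarrow> ('f etrm \<times> 'f etrm) set \<Rightarrow> 'f trm set \<Rightarrow> 'f trm \<Rightarrow> bool"
  for ar pl R where
  r: "seq_ok ar pl R \<Gamma> M \<Longrightarrow> provR ar pl R \<Gamma> M \<Longrightarrow> provL ar pl R \<Gamma> M"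
| lp: "seq_ok ar pl R (insert (Pair M N) \<Gamma>) T \<Longrightarrow>
       provL ar pl R (insert (Pair M N) (insert M (insert N \<Gamma>))) T \<Longrightarrow>
       provL ar pl R (insert (Pair M N) \<Gamma>) T"
| le: "seq_ok ar pl R (insert (Enc M K) \<Gamma>) N \<Longrightarrow>
       provR ar pl R (insert (Enc M K) \<Gamma>) K \<Longrightarrow>
       provL ar pl R (insert (Enc M K) (insert M (insert K \<Gamma>))) N \<Longrightarrow>
       provL ar pl R (insert (Enc M K) \<Gamma>) N"
| sign: "seq_ok ar pl R (insert (Sign M K) (insert (Pub L) \<Gamma>)) N \<Longrightarrow> ac_eq pl K L \<Longrightarrow>
       provL ar pl R (insert (Sign M K) (insert (Pub L) (insert M \<Gamma>))) N \<Longrightarrow>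
       provL ar pl R (insert (Sign M K) (insert (Pub L) \<Gamma>)) N"
| blind1: "seq_ok ar pl R (insert (Blind M K) \<Gamma>) N \<Longrightarrow>
       provR ar pl R (insert (Blind M K) \<Gamma>) K \<Longrightarrow>
       provL ar pl R (insert (Blind M K) (insert M (insert K \<Gamma>))) N \<Longrightarrow>
       provL ar pl R (insert (Blind M K) \<Gamma>) N"
| blind2: "seq_ok ar pl R (insert (Sign (Blind M Rr) K) \<Gamma>) N \<Longrightarrow>
       provR ar pl R (insert (Sign (Blind M Rr) K) \<Gamma>) Rr \<Longrightarrow>
       provL ar pl R (insert (Sign (Blind M Rr) K) (insert (Sign M K) (insert Rr \<Gamma>))) N \<Longrightarrow>
       provL ar pl R (insert (Sign (Blind M Rr) K) \<Gamma>) N"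
| ls: "seq_ok ar pl R \<Gamma> M \<Longrightarrow> guarded A \<Longrightarrow> (\<exists>t\<in>insert M \<Gamma>. subterm A t) \<Longrightarrow>
       provR ar pl R \<Gamma> A \<Longrightarrow> provL ar pl R (insert A \<Gamma>) M \<Longrightarrow> provL ar pl R \<Gamma> M"

end

theory Submission
  imports Defs
begin



lemma subterm_trans: "subterm b c \<Longrightarrow> subterm a b \<Longrightarrow> subterm a c"
  by (induction b c rule: subterm.induct) (auto intro: subterm.intros)

lemma subterm_size_cases: "subterm s t \<Longrightarrow> s = t \<or> size s < size t"
proof (induction rule: subterm.induct)
  case (fn t ts s f)
  then have "size t \<le> size_list size ts" by (simp add: size_list_estimation')
  with fn show ?case by auto
qed auto

lemma subterm_size: "subterm s t \<Longrightarrow> size s \<le> size t"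
  using subterm_size_cases by fastforce

inductive_simps subterm_Pub: "subterm s (Pub t)"
inductive_simps subterm_Sign: "subterm s (Sign t u)"
inductive_simps subterm_Blind: "subterm s (Blind t u)"
inductive_simps subterm_Pair: "subterm s (Pair t u)"
inductive_simps subterm_Enc: "subterm s (Enc t u)"
inductive_simps subterm_Fn: "subterm s (Fn f ts)"
inductive_simps subterm_Name: "subterm s (Name n)"
inductive_simps subterm_Var: "subterm s (Var n)"
lemmas subterm_simps = subterm_Pub subterm_Sign subterm_Blind subterm_Pair subterm_Enc
  subterm_Fn subterm_Name subterm_Var

inductive_simps wf_Pub: "wf_trm ar (Pub t)"
inductive_simps wf_Sign: "wf_trm ar (Sign t u)"
inductive_simps wf_Blind: "wf_trm ar (Blind t u)"
inductive_simps wf_Pair: "wf_trm ar (Pair t u)"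
inductive_simps wf_Enc: "wf_trm ar (Enc t u)"
inductive_simps wf_Fn: "wf_trm ar (Fn f ts)"
lemmas wf_simps = wf_Pub wf_Sign wf_Blind wf_Pair wf_Enc wf_Fn wf_trm.intros(1,2)

lemma subterm_wf: "subterm s t \<Longrightarrow> wf_trm ar t \<Longrightarrow> wf_trm ar s"
  by (induction rule: subterm.induct) (auto simp: wf_simps)

definition ctx :: "('f trm \<Rightarrow> 'f trm) \<Rightarrow> bool" where
  "ctx F \<longleftrightarrow> (\<forall>S a b. ctxt_cl S a b \<longrightarrow> ctxt_cl S (F a) (F b))"

lemma ctx_id: "ctx (\<lambda>x. x)" by (simp add: ctx_def)
lemma ctx_comp: "ctx F \<Longrightarrow> ctx G \<Longrightarrow> ctx (\<lambda>x. F (G x))" by (simp add: ctx_def)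
lemma ctx_Pub: "ctx Pub" by (auto simp: ctx_def intro: ctxt_cl.intros)
lemma ctx_Sign1: "ctx (\<lambda>x. Sign x u)" by (auto simp: ctx_def intro: ctxt_cl.intros)
lemma ctx_Sign2: "ctx (\<lambda>x. Sign u x)" by (auto simp: ctx_def intro: ctxt_cl.intros)
lemma ctx_Blind1: "ctx (\<lambda>x. Blind x u)" by (auto simp: ctx_def intro: ctxt_cl.intros)
lemma ctx_Blind2: "ctx (\<lambda>x. Blind u x)" by (auto simp: ctx_def intro: ctxt_cl.intros)
lemma ctx_Pair1: "ctx (\<lambda>x. Pair x u)" by (auto simp: ctx_def intro: ctxt_cl.intros)
lemma ctx_Pair2: "ctx (\<lambda>x. Pair u x)" by (auto simp: ctx_def intro: ctxt_cl.intros)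
lemma ctx_Enc1: "ctx (\<lambda>x. Enc x u)" by (auto simp: ctx_def intro: ctxt_cl.intros)
lemma ctx_Enc2: "ctx (\<lambda>x. Enc u x)" by (auto simp: ctx_def intro: ctxt_cl.intros)
lemma ctx_Fn: "ctx (\<lambda>x. Fn f (xs @ x # ys))" by (auto simp: ctx_def intro: ctxt_cl.intros)
lemmas ctx_basic = ctx_Pub ctx_Sign1 ctx_Sign2 ctx_Blind1 ctx_Blind2 ctx_Pair1 ctx_Pair2
  ctx_Enc1 ctx_Enc2 ctx_Fn

lemma ctxD: "ctx F \<Longrightarrow> ctxt_cl S a b \<Longrightarrow> ctxt_cl S (F a) (F b)"
  by (simp add: ctx_def)

lemma ex_ctx_comp: "ctx G \<Longrightarrow> \<exists>F. ctx F \<and> F s = t \<Longrightarrow> \<exists>F'. ctx F' \<and> F' s = G t"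
proof -
  assume G: "ctx G" and "\<exists>F. ctx F \<and> F s = t"
  then obtain F where "ctx F" "F s = t" by blast
  then show ?thesis using ctx_comp[OF G] by blast
qed

lemma subterm_ctx: "subterm s t \<Longrightarrow> \<exists>F. ctx F \<and> F s = t"
proof (induction rule: subterm.induct)
  case (refl t) then show ?case using ctx_id by blast
next
  case (fn t ts s f)
  from fn(1) obtain xs ys where "ts = xs @ t # ys" by (meson split_list)
  then show ?case using ex_ctx_comp[OF ctx_Fn[of f xs ys] fn(3)] by simp
next case (pub s t) show ?case by (rule ex_ctx_comp[OF ctx_Pub], fact)
next case (sign1 s t u) show ?case by (rule ex_ctx_comp[OF ctx_Sign1[of u]], fact)
next case (sign2 s u t) show ?case by (rule ex_ctx_comp[OF ctx_Sign2[of t]], fact)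
next case (blind1 s t u) show ?case by (rule ex_ctx_comp[OF ctx_Blind1[of u]], fact)
next case (blind2 s u t) show ?case by (rule ex_ctx_comp[OF ctx_Blind2[of t]], fact)
next case (pair1 s t u) show ?case by (rule ex_ctx_comp[OF ctx_Pair1[of u]], fact)
next case (pair2 s u t) show ?case by (rule ex_ctx_comp[OF ctx_Pair2[of t]], fact)
next case (enc1 s t u) show ?case by (rule ex_ctx_comp[OF ctx_Enc1[of u]], fact)
next case (enc2 s u t) show ?case by (rule ex_ctx_comp[OF ctx_Enc2[of t]], fact)
qed

lemma ctx_rtc: assumes "ctx F" shows "(ctxt_cl S)\<^sup>*\<^sup>* a b \<Longrightarrow> (ctxt_cl S)\<^sup>*\<^sup>* (F a) (F b)"
  by (induction rule: rtranclp_induct) (auto intro: rtranclp.rtrancl_into_rtrancl ctxD[OF assms])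

section \<open>AC\<close>

lemma ac_root_sym: "ac_root pl s t \<Longrightarrow> ac_root pl t s"
  by (induction rule: ac_root.induct) (auto intro: ac_root.intros)

lemma ctxt_cl_sym: assumes "\<And>a b. S a b \<Longrightarrow> S b a" shows "ctxt_cl S s t \<Longrightarrow> ctxt_cl S t s"
  by (induction rule: ctxt_cl.induct) (auto intro: ctxt_cl.intros assms)

lemma rtc_sym: assumes "\<And>a b. S a b \<Longrightarrow> S b a" shows "S\<^sup>*\<^sup>* s t \<Longrightarrow> S\<^sup>*\<^sup>* t s"
  by (induction rule: rtranclp_induct) (auto intro: converse_rtranclp_into_rtranclp assms)

lemma ac_step_sym: "ctxt_cl (ac_root pl) s t \<Longrightarrow> ctxt_cl (ac_root pl) t s"
  using ctxt_cl_sym[of "ac_root pl"] ac_root_sym by metis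

lemma ac_eq_refl[simp]: "ac_eq pl s s" by (simp add: ac_eq_def)
lemma ac_eq_sym: "ac_eq pl s t \<Longrightarrow> ac_eq pl t s"
  unfolding ac_eq_def using rtc_sym[of "ctxt_cl (ac_root pl)"] ac_step_sym by metis
lemma ac_eq_trans: "ac_eq pl s t \<Longrightarrow> ac_eq pl t u \<Longrightarrow> ac_eq pl s u"
  unfolding ac_eq_def by auto
lemma ac_eq_step: "ctxt_cl (ac_root pl) s t \<Longrightarrow> ac_eq pl s t"
  unfolding ac_eq_def by auto
lemma ac_eq_ctx: "ctx F \<Longrightarrow> ac_eq pl a b \<Longrightarrow> ac_eq pl (F a) (F b)"
  unfolding ac_eq_def by (rule ctx_rtc)

lemma ac_step_Pub: "ctxt_cl (ac_root pl) (Pub a) u \<Longrightarrow> \<exists>a'. u = Pub a' \<and> ctxt_cl (ac_root pl) a a'"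
  by (erule ctxt_cl.cases) (auto elim: ac_root.cases)
lemma ac_step_Sign: "ctxt_cl (ac_root pl) (Sign a b) u \<Longrightarrow> \<exists>a' b'. u = Sign a' b' \<and> ac_eq pl a a' \<and> ac_eq pl b b'"
  by (erule ctxt_cl.cases) (auto elim: ac_root.cases intro: ac_eq_step)
lemma ac_step_Blind: "ctxt_cl (ac_root pl) (Blind a b) u \<Longrightarrow> \<exists>a' b'. u = Blind a' b' \<and> ac_eq pl a a' \<and> ac_eq pl b b'"
  by (erule ctxt_cl.cases) (auto elim: ac_root.cases intro: ac_eq_step)
lemma ac_step_Pair: "ctxt_cl (ac_root pl) (Pair a b) u \<Longrightarrow> \<exists>a' b'. u = Pair a' b' \<and> ac_eq pl a a' \<and> ac_eq pl b b'"
  by (erule ctxt_cl.cases) (auto elim: ac_root.cases intro: ac_eq_step)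
lemma ac_step_Enc: "ctxt_cl (ac_root pl) (Enc a b) u \<Longrightarrow> \<exists>a' b'. u = Enc a' b' \<and> ac_eq pl a a' \<and> ac_eq pl b b'"
  by (erule ctxt_cl.cases) (auto elim: ac_root.cases intro: ac_eq_step)
lemma ac_step_Name: "ctxt_cl (ac_root pl) (Name n) u \<Longrightarrow> False"
  by (erule ctxt_cl.cases) (auto elim: ac_root.cases)
lemma ac_step_Var: "ctxt_cl (ac_root pl) (Var n) u \<Longrightarrow> False"
  by (erule ctxt_cl.cases) (auto elim: ac_root.cases)

lemma ac_eq_Pub: "ac_eq pl (Pub a) u \<Longrightarrow> \<exists>a'. u = Pub a' \<and> ac_eq pl a a'"
  unfolding ac_eq_def
  by (induction rule: rtranclp_induct) (auto dest!: ac_step_Pub intro: rtranclp.rtrancl_into_rtrancl)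

lemma ac_eq_Sign: "ac_eq pl (Sign a b) u \<Longrightarrow> \<exists>a' b'. u = Sign a' b' \<and> ac_eq pl a a' \<and> ac_eq pl b b'"
  unfolding ac_eq_def[of pl]
  by (induction rule: rtranclp_induct) (auto dest!: ac_step_Sign simp: ac_eq_def)




lemma ac_eq_Blind: "ac_eq pl (Blind a b) u \<Longrightarrow> \<exists>a' b'. u = Blind a' b' \<and> ac_eq pl a a' \<and> ac_eq pl b b'"
  unfolding ac_eq_def[of pl]
  by (induction rule: rtranclp_induct) (auto dest!: ac_step_Blind simp: ac_eq_def)
lemma ac_eq_Pair: "ac_eq pl (Pair a b) u \<Longrightarrow> \<exists>a' b'. u = Pair a' b' \<and> ac_eq pl a a' \<and> ac_eq pl b b'"
  unfolding ac_eq_def[of pl]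
  by (induction rule: rtranclp_induct) (auto dest!: ac_step_Pair simp: ac_eq_def)
lemma ac_eq_Enc: "ac_eq pl (Enc a b) u \<Longrightarrow> \<exists>a' b'. u = Enc a' b' \<and> ac_eq pl a a' \<and> ac_eq pl b b'"
  unfolding ac_eq_def[of pl]
  by (induction rule: rtranclp_induct) (auto dest!: ac_step_Enc simp: ac_eq_def)

lemma ac_step_size: "ctxt_cl (ac_root pl) s t \<Longrightarrow> size s = size t"
  by (induction rule: ctxt_cl.induct) (auto elim: ac_root.cases)

lemma ac_eq_size: "ac_eq pl s t \<Longrightarrow> size s = size t"
  unfolding ac_eq_def by (induction rule: rtranclp_induct) (auto dest: ac_step_size)

lemma ac_step_guarded: "ctxt_cl (ac_root pl) s t \<Longrightarrow> guarded s = guarded t"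
  by (erule ctxt_cl.cases) (auto elim: ac_root.cases)

lemma ac_eq_guarded: "ac_eq pl s t \<Longrightarrow> guarded s = guarded t"
  unfolding ac_eq_def by (induction rule: rtranclp_induct) (auto dest: ac_step_guarded)

lemma ac_step_wf: "ctxt_cl (ac_root pl) s t \<Longrightarrow> wf_trm ar s \<Longrightarrow> wf_trm ar t"
proof (induction rule: ctxt_cl.induct)
  case (base s t)
  then show ?case by (cases rule: ac_root.cases) (auto simp: wf_simps)
qed (auto simp: wf_simps)

lemma ac_eq_wf: "ac_eq pl s t \<Longrightarrow> wf_trm ar s \<Longrightarrow> wf_trm ar t"
  unfolding ac_eq_def by (induction rule: rtranclp_induct) (auto dest: ac_step_wf)

lemma eqE_refl[simp]: "eqE pl R s s" by (simp add: eqE_def)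

lemma eqE_sym: "eqE pl R s t \<Longrightarrow> eqE pl R t s"
  unfolding eqE_def
  by (rule rtc_sym[of "\<lambda>s t. rstep R s t \<or> rstep R t s \<or> ctxt_cl (ac_root pl) s t"])
     (auto dest: ac_step_sym)

lemma eqE_trans: "eqE pl R s t \<Longrightarrow> eqE pl R t u \<Longrightarrow> eqE pl R s u"
  unfolding eqE_def by auto

lemma ac_eq_eqE: "ac_eq pl s t \<Longrightarrow> eqE pl R s t"
  unfolding ac_eq_def eqE_def by (induction rule: rtranclp_induct) (auto intro: rtranclp.rtrancl_into_rtrancl)

lemma rstep_eqE: "rstep R s t \<Longrightarrow> eqE pl R s t"
  unfolding eqE_def by auto

lemma ac_step_eqE: "ctxt_cl (ac_root pl) s t \<Longrightarrow> eqE pl R s t"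
  unfolding eqE_def by auto

lemma eqE_ctx: assumes "ctx F" shows "eqE pl R s t \<Longrightarrow> eqE pl R (F s) (F t)"
  unfolding eqE_def
  by (induction rule: rtranclp_induct)
     (auto intro: rtranclp.rtrancl_into_rtrancl ctxD[OF assms] simp: rstep_def)

lemma eqE_Fn_list: "list_all2 (eqE pl R) ts us \<Longrightarrow> eqE pl R (Fn f (xs @ ts)) (Fn f (xs @ us))"
proof (induction ts us arbitrary: xs rule: list_all2_induct)
  case Nil then show ?case by simp
next
  case (Cons t ts u us)
  have "eqE pl R (Fn f (xs @ t # ts)) (Fn f (xs @ u # ts))"
    using eqE_ctx[OF ctx_Fn, OF Cons(1)] .
  moreover have "eqE pl R (Fn f ((xs @ [u]) @ ts)) (Fn f ((xs @ [u]) @ us))" by (rule Cons(3))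
  ultimately show ?case using eqE_trans by fastforce
qed

lemma eqE_Fn: "list_all2 (eqE pl R) ts us \<Longrightarrow> eqE pl R (Fn f ts) (Fn f us)"
  using eqE_Fn_list[of pl R ts us f "[]"] by simp

section \<open>normal forms\<close>

lemma rstep_ctx: "ctx F \<Longrightarrow> rstep R s t \<Longrightarrow> rstep R (F s) (F t)"
  unfolding rstep_def by (rule ctxD)

lemma rstep_ac_ctx: "ctx F \<Longrightarrow> rstep_ac pl R s t \<Longrightarrow> rstep_ac pl R (F s) (F t)"
  unfolding rstep_ac_def using ac_eq_ctx rstep_ctx by metis

lemma nf_subterm: "nf ar pl R t \<Longrightarrow> subterm s t \<Longrightarrow> nf ar pl R s"
proof -
  assume n: "nf ar pl R t" and st: "subterm s t"
  obtain F where F: "ctx F" "F s = t" using subterm_ctx[OF st] by blast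
  show ?thesis unfolding nf_def
  proof
    show "wf_trm ar s" using n st subterm_wf unfolding nf_def by blast
    show "\<not> (\<exists>u. rstep_ac pl R s u)"
      using n F rstep_ac_ctx unfolding nf_def by metis
  qed
qed

lemma nf_ac: "nf ar pl R t \<Longrightarrow> ac_eq pl t t' \<Longrightarrow> nf ar pl R t'"
  unfolding nf_def rstep_ac_def using ac_eq_wf ac_eq_trans by metis

lemma nf_rtc: "nf ar pl R t \<Longrightarrow> (rstep_ac pl R)\<^sup>*\<^sup>* t u \<Longrightarrow> u = t"
  unfolding nf_def by (metis converse_rtranclpE)

lemma nf_no_rstep: "nf ar pl R t \<Longrightarrow> rstep R t u \<Longrightarrow> False"
  unfolding nf_def rstep_ac_def by (metis ac_eq_refl)




lemma inst_subterm_guarded: "subterm g (inst \<sigma> r) \<Longrightarrow> guarded g \<Longrightarrow> \<exists>x\<in>evars r. subterm g (\<sigma> x)"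
proof (induction r)
  case (EV x) then show ?case by simp
next
  case (EF f ts)
  from EF(2,3) obtain t where "t \<in> set ts" "subterm g (inst \<sigma> t)"
    by (auto simp: subterm_Fn)
  with EF(1)[OF this] EF(3) show ?case by auto
qed

lemma evars_subterm: "x \<in> evars l \<Longrightarrow> subterm (\<sigma> x) (inst \<sigma> l)"
proof (induction l)
  case (EV y) then show ?case by (simp add: subterm.refl)
next
  case (EF f ts)
  then obtain t where "t \<in> set ts" "x \<in> evars t" by auto
  with EF(1)[OF this] show ?case by (auto intro!: subterm.fn[of "inst \<sigma> t"])
qed

lemma subterm_Fn_g: "subterm x (Fn f ts) \<Longrightarrow> guarded x \<Longrightarrow> \<exists>t\<in>set ts. subterm x t"
  by (auto simp: subterm_Fn)

lemma sfn: "subterm x u \<Longrightarrow> u \<in> set ts \<Longrightarrow> subterm x (Fn f ts)"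
  by (rule subterm.fn)

lemma gsm_ac: "ctxt_cl (ac_root pl) s t \<Longrightarrow> subterm x t \<Longrightarrow> guarded x \<Longrightarrow> \<exists>y. subterm y s \<and> ac_eq pl x y"
proof (induction arbitrary: x rule: ctxt_cl.induct)
  case (base s t)
  have "subterm x s" using base(1)
  proof (cases rule: ac_root.cases)
    case (assoc p a b c)
    with base(2,3) have "subterm x a \<or> subterm x b \<or> subterm x c"
      by (auto dest!: subterm_Fn_g)
    then show ?thesis using assoc(1) by (elim disjE) (meson sfn list.set_intros)+
  next
    case (assoc' p a b c)
    with base(2,3) have "subterm x a \<or> subterm x b \<or> subterm x c"
      by (auto dest!: subterm_Fn_g)
    then show ?thesis using assoc'(1) by (elim disjE) (meson sfn list.set_intros)+
  next
    case (comm p a b)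
    with base(2,3) have "subterm x a \<or> subterm x b"
      by (auto dest!: subterm_Fn_g)
    then show ?thesis using comm(1) by (elim disjE) (meson sfn list.set_intros)+
  qed
  then show ?case using ac_eq_refl by blast
next
  case (fn s t f xs ys)
  then show ?case
    by (auto simp: subterm_Fn intro: subterm.fn)
next
  case (pub s t)
  have st: "ac_eq pl (Pub t) (Pub s)" by (rule ac_eq_step, rule ac_step_sym, rule ctxt_cl.pub, fact)
  from pub.prems have "x = Pub t \<or> subterm x t" by (auto simp: subterm_simps)
  then show ?case
  proof (elim disjE)
    assume "subterm x t"
    then obtain y where "subterm y s" "ac_eq pl x y" using pub.IH pub.prems(2) by blast
    then show ?thesis by (auto intro: subterm.intros)
  qed (use st in \<open>auto intro: subterm.intros\<close>)
next
  case (sign1 s t u)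
  have st: "ac_eq pl (Sign t u) (Sign s u)" by (rule ac_eq_step, rule ac_step_sym, rule ctxt_cl.sign1, fact)
  from sign1.prems have "x = Sign t u \<or> subterm x t \<or> subterm x u" by (auto simp: subterm_simps)
  then show ?case
  proof (elim disjE)
    assume "subterm x t"
    then obtain y where "subterm y s" "ac_eq pl x y" using sign1.IH sign1.prems(2) by blast
    then show ?thesis by (auto intro: subterm.intros)
  qed (use st in \<open>auto intro: subterm.intros\<close>)
next
  case (sign2 s t u)
  have st: "ac_eq pl (Sign u t) (Sign u s)" by (rule ac_eq_step, rule ac_step_sym, rule ctxt_cl.sign2, fact)
  from sign2.prems have "x = Sign u t \<or> subterm x t \<or> subterm x u" by (auto simp: subterm_simps)
  then show ?case
  proof (elim disjE)
    assume "subterm x t"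
    then obtain y where "subterm y s" "ac_eq pl x y" using sign2.IH sign2.prems(2) by blast
    then show ?thesis by (auto intro: subterm.intros)
  qed (use st in \<open>auto intro: subterm.intros\<close>)
next
  case (blind1 s t u)
  have st: "ac_eq pl (Blind t u) (Blind s u)" by (rule ac_eq_step, rule ac_step_sym, rule ctxt_cl.blind1, fact)
  from blind1.prems have "x = Blind t u \<or> subterm x t \<or> subterm x u" by (auto simp: subterm_simps)
  then show ?case
  proof (elim disjE)
    assume "subterm x t"
    then obtain y where "subterm y s" "ac_eq pl x y" using blind1.IH blind1.prems(2) by blast
    then show ?thesis by (auto intro: subterm.intros)
  qed (use st in \<open>auto intro: subterm.intros\<close>)
next
  case (blind2 s t u)
  have st: "ac_eq pl (Blind u t) (Blind u s)" by (rule ac_eq_step, rule ac_step_sym, rule ctxt_cl.blind2, fact)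
  from blind2.prems have "x = Blind u t \<or> subterm x t \<or> subterm x u" by (auto simp: subterm_simps)
  then show ?case
  proof (elim disjE)
    assume "subterm x t"
    then obtain y where "subterm y s" "ac_eq pl x y" using blind2.IH blind2.prems(2) by blast
    then show ?thesis by (auto intro: subterm.intros)
  qed (use st in \<open>auto intro: subterm.intros\<close>)
next
  case (pair1 s t u)
  have st: "ac_eq pl (Pair t u) (Pair s u)" by (rule ac_eq_step, rule ac_step_sym, rule ctxt_cl.pair1, fact)
  from pair1.prems have "x = Pair t u \<or> subterm x t \<or> subterm x u" by (auto simp: subterm_simps)
  then show ?case
  proof (elim disjE)
    assume "subterm x t"
    then obtain y where "subterm y s" "ac_eq pl x y" using pair1.IH pair1.prems(2) by blast
    then show ?thesis by (auto intro: subterm.intros)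
  qed (use st in \<open>auto intro: subterm.intros\<close>)
next
  case (pair2 s t u)
  have st: "ac_eq pl (Pair u t) (Pair u s)" by (rule ac_eq_step, rule ac_step_sym, rule ctxt_cl.pair2, fact)
  from pair2.prems have "x = Pair u t \<or> subterm x t \<or> subterm x u" by (auto simp: subterm_simps)
  then show ?case
  proof (elim disjE)
    assume "subterm x t"
    then obtain y where "subterm y s" "ac_eq pl x y" using pair2.IH pair2.prems(2) by blast
    then show ?thesis by (auto intro: subterm.intros)
  qed (use st in \<open>auto intro: subterm.intros\<close>)
next
  case (enc1 s t u)
  have st: "ac_eq pl (Enc t u) (Enc s u)" by (rule ac_eq_step, rule ac_step_sym, rule ctxt_cl.enc1, fact)
  from enc1.prems have "x = Enc t u \<or> subterm x t \<or> subterm x u" by (auto simp: subterm_simps)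
  then show ?case
  proof (elim disjE)
    assume "subterm x t"
    then obtain y where "subterm y s" "ac_eq pl x y" using enc1.IH enc1.prems(2) by blast
    then show ?thesis by (auto intro: subterm.intros)
  qed (use st in \<open>auto intro: subterm.intros\<close>)
next
  case (enc2 s t u)
  have st: "ac_eq pl (Enc u t) (Enc u s)" by (rule ac_eq_step, rule ac_step_sym, rule ctxt_cl.enc2, fact)
  from enc2.prems have "x = Enc u t \<or> subterm x t \<or> subterm x u" by (auto simp: subterm_simps)
  then show ?case
  proof (elim disjE)
    assume "subterm x t"
    then obtain y where "subterm y s" "ac_eq pl x y" using enc2.IH enc2.prems(2) by blast
    then show ?thesis by (auto intro: subterm.intros)
  qed (use st in \<open>auto intro: subterm.intros\<close>)
qed

lemma gsm_ac_eq: assumes "ac_eq pl s t" shows "subterm x t \<Longrightarrow> guarded x \<Longrightarrow> \<exists>y. subterm y s \<and> ac_eq pl x y"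
  using assms[unfolded ac_eq_def]
proof (induction arbitrary: x rule: rtranclp_induct)
  case base then show ?case by (auto simp: ac_eq_def)
next
  case (step y z)
  from gsm_ac[OF step(2,4,5)] obtain y' where "subterm y' y" "ac_eq pl x y'" by blast
  moreover have "guarded y'" using ac_eq_guarded[OF \<open>ac_eq pl x y'\<close>] step(5) by simp
  ultimately show ?case using step(3) ac_eq_trans by blast
qed




definition Qnf :: "('f \<Rightarrow> nat) \<Rightarrow> 'f option \<Rightarrow> ('f etrm \<times> 'f etrm) set \<Rightarrow> 'f trm \<Rightarrow> bool" where
  "Qnf ar pl R t \<longleftrightarrow> (\<forall>y. subterm y t \<longrightarrow> guarded y \<longrightarrow> nf ar pl R y)"

definition PG :: "'f option \<Rightarrow> 'f trm set \<Rightarrow> 'f trm \<Rightarrow> bool" where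
  "PG pl G t \<longleftrightarrow> (\<forall>x. subterm x t \<longrightarrow> guarded x \<longrightarrow> (\<exists>g\<in>G. ac_eq pl x g))"

lemma Qnf_sub: "Qnf ar pl R t \<Longrightarrow> subterm s t \<Longrightarrow> Qnf ar pl R s"
  unfolding Qnf_def using subterm_trans by blast

lemma PG_sub: "PG pl G t \<Longrightarrow> subterm s t \<Longrightarrow> PG pl G s"
  unfolding PG_def using subterm_trans by blast

lemma Qnf_no_step: "Qnf ar pl R s \<Longrightarrow> guarded s \<Longrightarrow> rstep R s t \<Longrightarrow> False"
  unfolding Qnf_def using nf_no_rstep subterm.refl by blast

lemma nf_Qnf: "nf ar pl R t \<Longrightarrow> Qnf ar pl R t"
  unfolding Qnf_def using nf_subterm by blast

lemma Qnf_ac: "ac_eq pl s t \<Longrightarrow> Qnf ar pl R s \<Longrightarrow> Qnf ar pl R t"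
  unfolding Qnf_def by (metis gsm_ac_eq ac_eq_guarded ac_eq_sym nf_ac)

lemma PG_ac: "ac_eq pl s t \<Longrightarrow> PG pl G s \<Longrightarrow> PG pl G t"
  unfolding PG_def by (metis gsm_ac_eq ac_eq_guarded ac_eq_trans)

lemma PG_Qnf: "\<forall>g\<in>G. nf ar pl R g \<Longrightarrow> PG pl G t \<Longrightarrow> Qnf ar pl R t"
  unfolding PG_def Qnf_def by (metis ac_eq_sym nf_ac)

context
  fixes ar :: "'f \<Rightarrow> nat" and pl :: "'f option" and R :: "('f etrm \<times> 'f etrm) set"
  assumes good: "good_theory ar pl R"
begin

lemma rule_vars: "(l, r) \<in> R \<Longrightarrow> evars r \<subseteq> evars l"
  using good unfolding good_theory_def by auto

lemma gsm_r: assumes "rstep R s t" shows "Qnf ar pl R s \<Longrightarrow> subterm x t \<Longrightarrow> guarded x \<Longrightarrow> subterm x s"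
  using assms[unfolded rstep_def]
proof (induction arbitrary: x rule: ctxt_cl.induct)
  case (base s t)
  from base.hyps show ?case
  proof (cases rule: r_root.cases)
    case (1 l r \<sigma>)
    from inst_subterm_guarded[of x \<sigma> r] base.prems 1 obtain y where "y \<in> evars r" "subterm x (\<sigma> y)" by auto
    moreover have "y \<in> evars l" using rule_vars[OF 1(3)] \<open>y \<in> evars r\<close> by auto
    ultimately show ?thesis using evars_subterm[of y l \<sigma>] 1 subterm_trans by blast
  qed
next
  case (fn s t f xs ys)
  from subterm_Fn_g[OF fn.prems(2,3)] obtain u where u: "u \<in> set (xs @ t # ys)" "subterm x u" by blast
  show ?case
  proof (cases "u = t")
    case True
    have "subterm s (Fn f (xs @ s # ys))" by (rule sfn[OF subterm.refl]) simp
    then have "Qnf ar pl R s" using fn.prems(1) Qnf_sub by blast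
    then have "subterm x s" using fn.IH fn.prems u True by blast
    then show ?thesis by (auto intro: sfn)
  next
    case False
    then show ?thesis using u by (auto intro: sfn)
  qed
next
  case (pub s t)
  have "rstep R (Pub s) (Pub t)" unfolding rstep_def by (rule ctxt_cl.pub, fact)
  then have False using Qnf_no_step[OF pub.prems(1)] by simp
  then show ?case ..
next
  case (sign1 s t u)
  have "rstep R (Sign s u) (Sign t u)" unfolding rstep_def by (rule ctxt_cl.sign1, fact)
  then have False using Qnf_no_step[OF sign1.prems(1)] by simp
  then show ?case ..
next
  case (sign2 s t u)
  have "rstep R (Sign u s) (Sign u t)" unfolding rstep_def by (rule ctxt_cl.sign2, fact)
  then have False using Qnf_no_step[OF sign2.prems(1)] by simp
  then show ?case ..
next
  case (blind1 s t u)
  have "rstep R (Blind s u) (Blind t u)" unfolding rstep_def by (rule ctxt_cl.blind1, fact)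
  then have False using Qnf_no_step[OF blind1.prems(1)] by simp
  then show ?case ..
next
  case (blind2 s t u)
  have "rstep R (Blind u s) (Blind u t)" unfolding rstep_def by (rule ctxt_cl.blind2, fact)
  then have False using Qnf_no_step[OF blind2.prems(1)] by simp
  then show ?case ..
next
  case (pair1 s t u)
  have "rstep R (Pair s u) (Pair t u)" unfolding rstep_def by (rule ctxt_cl.pair1, fact)
  then have False using Qnf_no_step[OF pair1.prems(1)] by simp
  then show ?case ..
next
  case (pair2 s t u)
  have "rstep R (Pair u s) (Pair u t)" unfolding rstep_def by (rule ctxt_cl.pair2, fact)
  then have False using Qnf_no_step[OF pair2.prems(1)] by simp
  then show ?case ..
next
  case (enc1 s t u)
  have "rstep R (Enc s u) (Enc t u)" unfolding rstep_def by (rule ctxt_cl.enc1, fact)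
  then have False using Qnf_no_step[OF enc1.prems(1)] by simp
  then show ?case ..
next
  case (enc2 s t u)
  have "rstep R (Enc u s) (Enc u t)" unfolding rstep_def by (rule ctxt_cl.enc2, fact)
  then have False using Qnf_no_step[OF enc2.prems(1)] by simp
  then show ?case ..
qed

lemma Qnf_rstep: "rstep R s t \<Longrightarrow> Qnf ar pl R s \<Longrightarrow> Qnf ar pl R t"
  using gsm_r unfolding Qnf_def by blast

lemma PG_rstep: "rstep R s t \<Longrightarrow> Qnf ar pl R s \<Longrightarrow> PG pl G s \<Longrightarrow> PG pl G t"
  using gsm_r unfolding PG_def by blast

lemma Qnf_rstep_ac: "rstep_ac pl R s t \<Longrightarrow> Qnf ar pl R s \<Longrightarrow> Qnf ar pl R t"
  unfolding rstep_ac_def using Qnf_ac Qnf_rstep by blast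

lemma PG_rstep_ac: "rstep_ac pl R s t \<Longrightarrow> \<forall>g\<in>G. nf ar pl R g \<Longrightarrow> PG pl G s \<Longrightarrow> PG pl G t"
  unfolding rstep_ac_def using PG_ac PG_rstep PG_Qnf by metis

lemma PG_rtc: "(rstep_ac pl R)\<^sup>*\<^sup>* s t \<Longrightarrow> \<forall>g\<in>G. nf ar pl R g \<Longrightarrow> PG pl G s \<Longrightarrow> PG pl G t"
  by (induction rule: rtranclp_induct) (auto dest: PG_rstep_ac)

lemma ectx_wf: "C \<in> ectx ar \<Gamma> \<Longrightarrow> \<forall>t\<in>\<Gamma>. wf_trm ar t \<Longrightarrow> wf_trm ar C"
  by (induction rule: ectx.induct) (auto simp: wf_simps)

lemma ectx_subterm: "C \<in> ectx ar \<Gamma> \<Longrightarrow> subterm x C \<Longrightarrow> guarded x \<Longrightarrow> \<exists>t\<in>\<Gamma>. subterm x t"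
  by (induction arbitrary: x rule: ectx.induct) (auto dest: subterm_Fn_g)

lemma confl: "wf_trm ar s \<Longrightarrow> wf_trm ar t \<Longrightarrow> eqE pl R s t \<Longrightarrow>
   \<exists>s' t'. (rstep_ac pl R)\<^sup>*\<^sup>* s s' \<and> (rstep_ac pl R)\<^sup>*\<^sup>* t t' \<and> ac_eq pl s' t'"
  using good unfolding good_theory_def confluent_ac_def by blast

lemma alien:
  assumes ok: "seq_ok ar pl R \<Gamma> A" and g: "guarded A" and C: "C \<in> ectx ar \<Gamma>" and e: "eqE pl R A C"
  shows "\<exists>t\<in>\<Gamma>. \<exists>g. subterm g t \<and> guarded g \<and> ac_eq pl A g"
proof -
  define G where "G = {g. guarded g \<and> (\<exists>t\<in>\<Gamma>. subterm g t)}"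
  have Gnf: "\<forall>g\<in>G. nf ar pl R g" using ok nf_subterm unfolding G_def seq_ok_def by blast
  have wfC: "wf_trm ar C" using ectx_wf[OF C] ok unfolding seq_ok_def nf_def by blast
  have nA: "nf ar pl R A" using ok unfolding seq_ok_def by blast
  then have wfA: "wf_trm ar A" unfolding nf_def by blast
  obtain s' t' where st: "(rstep_ac pl R)\<^sup>*\<^sup>* A s'" "(rstep_ac pl R)\<^sup>*\<^sup>* C t'" "ac_eq pl s' t'"
    using confl[OF wfA wfC e] by blast
  have "s' = A" using nf_rtc[OF nA st(1)] .
  have "PG pl G C" unfolding PG_def G_def using ectx_subterm[OF C] ac_eq_refl by blast
  then have "PG pl G t'" using PG_rtc[OF st(2) Gnf] by blast
  then have "PG pl G A" using PG_ac[OF ac_eq_sym[OF st(3)]] \<open>s' = A\<close> by simp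
  then obtain g where "g \<in> G" "ac_eq pl A g" using g unfolding PG_def using subterm.refl by blast
  then show ?thesis unfolding G_def by blast
qed

end




fun repl :: "'f option \<Rightarrow> 'f trm \<Rightarrow> 'f trm \<Rightarrow> 'f trm \<Rightarrow> 'f trm" where
  "repl pl A X (Fn f ts) = Fn f (map (repl pl A X) ts)"
| "repl pl A X (Name n) = (if ac_eq pl (Name n) A then X else Name n)"
| "repl pl A X (Var n) = (if ac_eq pl (Var n) A then X else Var n)"
| "repl pl A X (Pub s) = (if ac_eq pl (Pub s) A then X else Pub (repl pl A X s))"
| "repl pl A X (Sign s u) = (if ac_eq pl (Sign s u) A then X else Sign (repl pl A X s) (repl pl A X u))"
| "repl pl A X (Blind s u) = (if ac_eq pl (Blind s u) A then X else Blind (repl pl A X s) (repl pl A X u))"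
| "repl pl A X (Pair s u) = (if ac_eq pl (Pair s u) A then X else Pair (repl pl A X s) (repl pl A X u))"
| "repl pl A X (Enc s u) = (if ac_eq pl (Enc s u) A then X else Enc (repl pl A X s) (repl pl A X u))"

lemma repl_inst: "repl pl A X (inst \<sigma> l) = inst (\<lambda>x. repl pl A X (\<sigma> x)) l"
  by (induction l) auto

lemma repl_guarded_self: "guarded A \<Longrightarrow> repl pl A X A = X"
  by (cases A) auto

lemma repl_id: "(\<forall>x. subterm x T \<longrightarrow> guarded x \<longrightarrow> \<not> ac_eq pl x A) \<Longrightarrow> repl pl A X T = T"
proof (induction T)
  case (Fn f ts)
  have "\<forall>t\<in>set ts. repl pl A X t = t"
  proof
    fix t assume t: "t \<in> set ts"
    show "repl pl A X t = t" using Fn.IH[OF t] Fn.prems t by (meson sfn)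
  qed
  then show ?case by (simp add: map_idI)
qed (auto simp: subterm_simps)

lemma repl_ectx: "C \<in> ectx ar (insert A \<Gamma>) \<Longrightarrow> guarded A \<Longrightarrow> X \<in> ectx ar \<Gamma> \<Longrightarrow>
   (\<forall>t\<in>\<Gamma>. repl pl A X t = t) \<Longrightarrow> repl pl A X C \<in> ectx ar \<Gamma>"
  by (induction rule: ectx.induct) (auto simp: repl_guarded_self intro!: ectx.fn intro: ectx.hole)

lemma repl_ac_step: "ctxt_cl (ac_root pl) s t \<Longrightarrow> eqE pl R (repl pl A X s) (repl pl A X t)"
proof (induction rule: ctxt_cl.induct)
  case (base s t)
  then show ?case
    by (cases rule: ac_root.cases) (auto intro!: ac_step_eqE ctxt_cl.base intro: ac_root.intros)
next
  case (fn s t f xs ys)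
  then show ?case using eqE_ctx[OF ctx_Fn] by simp
next
  case (pub s t)
  have st: "ctxt_cl (ac_root pl) (Pub s) (Pub t)" by (rule ctxt_cl.pub, fact)
  have iff: "ac_eq pl (Pub s) A \<longleftrightarrow> ac_eq pl (Pub t) A"
    using ac_eq_step[OF st] ac_eq_step[OF ac_step_sym[OF st]] ac_eq_trans by blast
  have "eqE pl R (Pub (repl pl A X s)) (Pub (repl pl A X t))" by (rule eqE_ctx[OF ctx_Pub], fact)
  then show ?case using iff by auto
next
  case (sign1 s t u)
  have st: "ctxt_cl (ac_root pl) (Sign s u) (Sign t u)" by (rule ctxt_cl.sign1, fact)
  have iff: "ac_eq pl (Sign s u) A \<longleftrightarrow> ac_eq pl (Sign t u) A"
    using ac_eq_step[OF st] ac_eq_step[OF ac_step_sym[OF st]] ac_eq_trans by blast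
  have "eqE pl R ((\<lambda>x. Sign x (repl pl A X u)) (repl pl A X s)) ((\<lambda>x. Sign x (repl pl A X u)) (repl pl A X t))" by (rule eqE_ctx[OF ctx_Sign1], fact)
  then show ?case using iff by auto
next
  case (sign2 s t u)
  have st: "ctxt_cl (ac_root pl) (Sign u s) (Sign u t)" by (rule ctxt_cl.sign2, fact)
  have iff: "ac_eq pl (Sign u s) A \<longleftrightarrow> ac_eq pl (Sign u t) A"
    using ac_eq_step[OF st] ac_eq_step[OF ac_step_sym[OF st]] ac_eq_trans by blast
  have "eqE pl R ((\<lambda>x. Sign (repl pl A X u) x) (repl pl A X s)) ((\<lambda>x. Sign (repl pl A X u) x) (repl pl A X t))" by (rule eqE_ctx[OF ctx_Sign2], fact)
  then show ?case using iff by auto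
next
  case (blind1 s t u)
  have st: "ctxt_cl (ac_root pl) (Blind s u) (Blind t u)" by (rule ctxt_cl.blind1, fact)
  have iff: "ac_eq pl (Blind s u) A \<longleftrightarrow> ac_eq pl (Blind t u) A"
    using ac_eq_step[OF st] ac_eq_step[OF ac_step_sym[OF st]] ac_eq_trans by blast
  have "eqE pl R ((\<lambda>x. Blind x (repl pl A X u)) (repl pl A X s)) ((\<lambda>x. Blind x (repl pl A X u)) (repl pl A X t))" by (rule eqE_ctx[OF ctx_Blind1], fact)
  then show ?case using iff by auto
next
  case (blind2 s t u)
  have st: "ctxt_cl (ac_root pl) (Blind u s) (Blind u t)" by (rule ctxt_cl.blind2, fact)
  have iff: "ac_eq pl (Blind u s) A \<longleftrightarrow> ac_eq pl (Blind u t) A"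
    using ac_eq_step[OF st] ac_eq_step[OF ac_step_sym[OF st]] ac_eq_trans by blast
  have "eqE pl R ((\<lambda>x. Blind (repl pl A X u) x) (repl pl A X s)) ((\<lambda>x. Blind (repl pl A X u) x) (repl pl A X t))" by (rule eqE_ctx[OF ctx_Blind2], fact)
  then show ?case using iff by auto
next
  case (pair1 s t u)
  have st: "ctxt_cl (ac_root pl) (Pair s u) (Pair t u)" by (rule ctxt_cl.pair1, fact)
  have iff: "ac_eq pl (Pair s u) A \<longleftrightarrow> ac_eq pl (Pair t u) A"
    using ac_eq_step[OF st] ac_eq_step[OF ac_step_sym[OF st]] ac_eq_trans by blast
  have "eqE pl R ((\<lambda>x. Pair x (repl pl A X u)) (repl pl A X s)) ((\<lambda>x. Pair x (repl pl A X u)) (repl pl A X t))" by (rule eqE_ctx[OF ctx_Pair1], fact)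
  then show ?case using iff by auto
next
  case (pair2 s t u)
  have st: "ctxt_cl (ac_root pl) (Pair u s) (Pair u t)" by (rule ctxt_cl.pair2, fact)
  have iff: "ac_eq pl (Pair u s) A \<longleftrightarrow> ac_eq pl (Pair u t) A"
    using ac_eq_step[OF st] ac_eq_step[OF ac_step_sym[OF st]] ac_eq_trans by blast
  have "eqE pl R ((\<lambda>x. Pair (repl pl A X u) x) (repl pl A X s)) ((\<lambda>x. Pair (repl pl A X u) x) (repl pl A X t))" by (rule eqE_ctx[OF ctx_Pair2], fact)
  then show ?case using iff by auto
next
  case (enc1 s t u)
  have st: "ctxt_cl (ac_root pl) (Enc s u) (Enc t u)" by (rule ctxt_cl.enc1, fact)
  have iff: "ac_eq pl (Enc s u) A \<longleftrightarrow> ac_eq pl (Enc t u) A"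
    using ac_eq_step[OF st] ac_eq_step[OF ac_step_sym[OF st]] ac_eq_trans by blast
  have "eqE pl R ((\<lambda>x. Enc x (repl pl A X u)) (repl pl A X s)) ((\<lambda>x. Enc x (repl pl A X u)) (repl pl A X t))" by (rule eqE_ctx[OF ctx_Enc1], fact)
  then show ?case using iff by auto
next
  case (enc2 s t u)
  have st: "ctxt_cl (ac_root pl) (Enc u s) (Enc u t)" by (rule ctxt_cl.enc2, fact)
  have iff: "ac_eq pl (Enc u s) A \<longleftrightarrow> ac_eq pl (Enc u t) A"
    using ac_eq_step[OF st] ac_eq_step[OF ac_step_sym[OF st]] ac_eq_trans by blast
  have "eqE pl R ((\<lambda>x. Enc (repl pl A X u) x) (repl pl A X s)) ((\<lambda>x. Enc (repl pl A X u) x) (repl pl A X t))" by (rule eqE_ctx[OF ctx_Enc2], fact)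
  then show ?case using iff by auto
qed

lemma repl_ac_eq: "ac_eq pl s t \<Longrightarrow> eqE pl R (repl pl A X s) (repl pl A X t)"
  unfolding ac_eq_def
  by (induction rule: rtranclp_induct) (auto dest: repl_ac_step[of pl _ _ R A X] intro: eqE_trans)

context
  fixes ar :: "'f \<Rightarrow> nat" and pl :: "'f option" and R :: "('f etrm \<times> 'f etrm) set"
  assumes good: "good_theory ar pl R"
begin

lemma repl_rstep: assumes "rstep R s t" shows "Qnf ar pl R s \<Longrightarrow> eqE pl R (repl pl A X s) (repl pl A X t)"
  using assms[unfolded rstep_def]
proof (induction rule: ctxt_cl.induct)
  case (base s t)
  from base.hyps show ?case
  proof (cases rule: r_root.cases)
    case (1 l r \<sigma>)
    have "rstep R (inst (\<lambda>x. repl pl A X (\<sigma> x)) l) (inst (\<lambda>x. repl pl A X (\<sigma> x)) r)"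
      unfolding rstep_def by (rule ctxt_cl.base, rule r_root.intros, fact)
    then show ?thesis using 1 by (simp add: repl_inst rstep_eqE)
  qed
next
  case (fn s t f xs ys)
  have "subterm s (Fn f (xs @ s # ys))" by (rule sfn[OF subterm.refl]) simp
  then have "Qnf ar pl R s" using fn.prems(1) Qnf_sub by blast
  then show ?case using fn.IH eqE_ctx[OF ctx_Fn] by simp
next
  case (pub s t)
  have "rstep R (Pub s) (Pub t)" unfolding rstep_def by (rule ctxt_cl.pub, fact)
  then have False using Qnf_no_step[OF pub.prems(1)] by simp
  then show ?case ..
next
  case (sign1 s t u)
  have "rstep R (Sign s u) (Sign t u)" unfolding rstep_def by (rule ctxt_cl.sign1, fact)
  then have False using Qnf_no_step[OF sign1.prems(1)] by simp
  then show ?case ..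
next
  case (sign2 s t u)
  have "rstep R (Sign u s) (Sign u t)" unfolding rstep_def by (rule ctxt_cl.sign2, fact)
  then have False using Qnf_no_step[OF sign2.prems(1)] by simp
  then show ?case ..
next
  case (blind1 s t u)
  have "rstep R (Blind s u) (Blind t u)" unfolding rstep_def by (rule ctxt_cl.blind1, fact)
  then have False using Qnf_no_step[OF blind1.prems(1)] by simp
  then show ?case ..
next
  case (blind2 s t u)
  have "rstep R (Blind u s) (Blind u t)" unfolding rstep_def by (rule ctxt_cl.blind2, fact)
  then have False using Qnf_no_step[OF blind2.prems(1)] by simp
  then show ?case ..
next
  case (pair1 s t u)
  have "rstep R (Pair s u) (Pair t u)" unfolding rstep_def by (rule ctxt_cl.pair1, fact)
  then have False using Qnf_no_step[OF pair1.prems(1)] by simp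
  then show ?case ..
next
  case (pair2 s t u)
  have "rstep R (Pair u s) (Pair u t)" unfolding rstep_def by (rule ctxt_cl.pair2, fact)
  then have False using Qnf_no_step[OF pair2.prems(1)] by simp
  then show ?case ..
next
  case (enc1 s t u)
  have "rstep R (Enc s u) (Enc t u)" unfolding rstep_def by (rule ctxt_cl.enc1, fact)
  then have False using Qnf_no_step[OF enc1.prems(1)] by simp
  then show ?case ..
next
  case (enc2 s t u)
  have "rstep R (Enc u s) (Enc u t)" unfolding rstep_def by (rule ctxt_cl.enc2, fact)
  then have False using Qnf_no_step[OF enc2.prems(1)] by simp
  then show ?case ..
qed

lemma repl_rstep_ac: "rstep_ac pl R s t \<Longrightarrow> Qnf ar pl R s \<Longrightarrow> eqE pl R (repl pl A X s) (repl pl A X t)"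
  unfolding rstep_ac_def by (metis repl_ac_eq repl_rstep Qnf_ac eqE_trans)

lemma Qnf_rtc: "(rstep_ac pl R)\<^sup>*\<^sup>* s t \<Longrightarrow> Qnf ar pl R s \<Longrightarrow> Qnf ar pl R t"
  by (induction rule: rtranclp_induct) (auto dest: Qnf_rstep_ac[OF good])

lemma repl_rtc: "(rstep_ac pl R)\<^sup>*\<^sup>* s t \<Longrightarrow> Qnf ar pl R s \<Longrightarrow> eqE pl R (repl pl A X s) (repl pl A X t)"
proof (induction rule: rtranclp_induct)
  case (step y z)
  then show ?case using Qnf_rtc repl_rstep_ac eqE_trans by metis
qed simp

lemma repl_eqE:
  assumes "wf_trm ar s" "wf_trm ar t" "Qnf ar pl R s" "Qnf ar pl R t" "eqE pl R s t"
  shows "eqE pl R (repl pl A X s) (repl pl A X t)"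
proof -
  obtain s' t' where st: "(rstep_ac pl R)\<^sup>*\<^sup>* s s'" "(rstep_ac pl R)\<^sup>*\<^sup>* t t'" "ac_eq pl s' t'"
    using confl[OF good assms(1,2,5)] by blast
  have "eqE pl R (repl pl A X s) (repl pl A X s')" using repl_rtc[OF st(1) assms(3)] .
  moreover have "eqE pl R (repl pl A X s') (repl pl A X t')" using repl_ac_eq[OF st(3)] .
  moreover have "eqE pl R (repl pl A X t) (repl pl A X t')" using repl_rtc[OF st(2) assms(4)] .
  ultimately show ?thesis using eqE_trans eqE_sym by metis
qed

end




lemma list_choice: "\<forall>t\<in>set ts. \<exists>u. P t u \<Longrightarrow> \<exists>us. list_all2 P ts us"
  by (induction ts) (auto intro: list_all2_Cons[THEN iffD2])

lemma ectx_mono: "C \<in> ectx ar \<Gamma> \<Longrightarrow> \<Gamma> \<subseteq> \<Gamma>' \<Longrightarrow> C \<in> ectx ar \<Gamma>'"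
  by (induction rule: ectx.induct) (auto intro: ectx.intros)

lemma esub: assumes AD: "eqE pl R A D" "D \<in> ectx ar \<Gamma>"
  shows "C \<in> ectx ar (insert A \<Gamma>) \<Longrightarrow> \<exists>C'\<in>ectx ar \<Gamma>. eqE pl R C C'"
proof (induction rule: ectx.induct)
  case (hole M)
  show ?case
  proof (cases "M = A")
    case True then show ?thesis using AD by blast
  next
    case False then have "M \<in> ectx ar \<Gamma>" using hole by (auto intro: ectx.hole)
    then show ?thesis using eqE_refl by blast
  qed
next
  case (fn ts f)
  have "\<forall>t\<in>set ts. \<exists>u. u \<in> ectx ar \<Gamma> \<and> eqE pl R t u" using fn.IH by fastforce
  then obtain us where us: "list_all2 (\<lambda>t u. u \<in> ectx ar \<Gamma> \<and> eqE pl R t u) ts us"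
    using list_choice[of ts "\<lambda>t u. u \<in> ectx ar \<Gamma> \<and> eqE pl R t u"] by blast
  have "length us = ar f" using us fn(1) list_all2_lengthD by fastforce
  moreover have "\<forall>u\<in>set us. u \<in> ectx ar \<Gamma>" using us by (metis (no_types, lifting) in_set_conv_nth list_all2_conv_all_nth)
  ultimately have "Fn f us \<in> ectx ar \<Gamma>" by (rule ectx.fn)
  moreover have "eqE pl R (Fn f ts) (Fn f us)"
    using eqE_Fn[of pl R ts us f] us list_all2_mono by (metis (no_types, lifting))
  ultimately show ?case by blast
qed

definition ctx_ok :: "('f \<Rightarrow> nat) \<Rightarrow> 'f option \<Rightarrow> ('f etrm \<times> 'f etrm) set \<Rightarrow> 'f trm set \<Rightarrow> bool" where
  "ctx_ok ar pl R \<Gamma> \<longleftrightarrow> finite \<Gamma> \<and> (\<forall>t\<in>\<Gamma>. nf ar pl R t)"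

lemma seq_ok_iff: "seq_ok ar pl R \<Gamma> M \<longleftrightarrow> ctx_ok ar pl R \<Gamma> \<and> nf ar pl R M"
  unfolding seq_ok_def ctx_ok_def by blast

lemma provR_ok: "provR ar pl R \<Gamma> M \<Longrightarrow> seq_ok ar pl R \<Gamma> M"
  by (induction rule: provR.induct) auto

lemma provL_ok: "provL ar pl R \<Gamma> M \<Longrightarrow> seq_ok ar pl R \<Gamma> M"
  by (induction rule: provL.induct) auto

lemma provR_weak: "provR ar pl R \<Gamma> M \<Longrightarrow> \<Gamma> \<subseteq> \<Gamma>' \<Longrightarrow> ctx_ok ar pl R \<Gamma>' \<Longrightarrow> provR ar pl R \<Gamma>' M"
proof (induction rule: provR.induct)
  case (idR \<Gamma> M C)
  then show ?case using ectx_mono provR.idR by (metis seq_ok_iff)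
qed (auto simp: seq_ok_iff intro: provR.intros)

lemma provR_ac: "provR ar pl R \<Gamma> M \<Longrightarrow> ac_eq pl M M' \<Longrightarrow> provR ar pl R \<Gamma> M'"
proof (induction arbitrary: M' rule: provR.induct)
  case (idR \<Gamma> M C)
  then show ?case by (metis ac_eq_eqE eqE_sym eqE_trans nf_ac provR.idR seq_ok_def)
next
  case (pR \<Gamma> M N)
  then obtain a b where "M' = Pair a b" "ac_eq pl M a" "ac_eq pl N b" using ac_eq_Pair by blast
  then show ?case using pR by (metis nf_ac provR.pR seq_ok_def)
next
  case (eR \<Gamma> M N)
  then obtain a b where "M' = Enc a b" "ac_eq pl M a" "ac_eq pl N b" using ac_eq_Enc by blast
  then show ?case using eR by (metis nf_ac provR.eR seq_ok_def)
next
  case (signR \<Gamma> M N)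
  then obtain a b where "M' = Sign a b" "ac_eq pl M a" "ac_eq pl N b" using ac_eq_Sign by blast
  then show ?case using signR by (metis nf_ac provR.signR seq_ok_def)
next
  case (blindR \<Gamma> M N)
  then obtain a b where "M' = Blind a b" "ac_eq pl M a" "ac_eq pl N b" using ac_eq_Blind by blast
  then show ?case using blindR by (metis nf_ac provR.blindR seq_ok_def)
qed

lemma rsubst: "provR ar pl R \<Delta> B \<Longrightarrow> \<Delta> \<subseteq> insert A \<Gamma> \<Longrightarrow> eqE pl R A D \<Longrightarrow> D \<in> ectx ar \<Gamma> \<Longrightarrow>
   ctx_ok ar pl R \<Gamma> \<Longrightarrow> provR ar pl R \<Gamma> B"
proof (induction rule: provR.induct)
  case (idR \<Delta> M C)
  then have "C \<in> ectx ar (insert A \<Gamma>)" using ectx_mono by blast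
  then obtain C' where "C' \<in> ectx ar \<Gamma>" "eqE pl R C C'" using esub[OF idR.prems(2,3)] by blast
  then show ?case using idR by (metis eqE_trans provR.idR seq_ok_iff)
qed (auto simp: seq_ok_iff intro: provR.intros)

lemma provR_cases_g: "provR ar pl R \<Gamma> A \<Longrightarrow> (\<exists>C\<in>ectx ar \<Gamma>. eqE pl R A C) \<or> guarded A"
  by (cases rule: provR.cases) auto

lemma provR_ectx_ne: "provR ar pl R \<Gamma> A \<Longrightarrow> \<exists>C. C \<in> ectx ar \<Gamma>"
  by (induction rule: provR.induct) auto

lemma provR_Pair: "provR ar pl R \<Gamma> (Pair M N) \<Longrightarrow> (\<exists>C\<in>ectx ar \<Gamma>. eqE pl R (Pair M N) C) \<or> (provR ar pl R \<Gamma> M \<and> provR ar pl R \<Gamma> N)"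
  by (cases rule: provR.cases) auto
lemma provR_Enc: "provR ar pl R \<Gamma> (Enc M N) \<Longrightarrow> (\<exists>C\<in>ectx ar \<Gamma>. eqE pl R (Enc M N) C) \<or> (provR ar pl R \<Gamma> M \<and> provR ar pl R \<Gamma> N)"
  by (cases rule: provR.cases) auto
lemma provR_Sign: "provR ar pl R \<Gamma> (Sign M N) \<Longrightarrow> (\<exists>C\<in>ectx ar \<Gamma>. eqE pl R (Sign M N) C) \<or> (provR ar pl R \<Gamma> M \<and> provR ar pl R \<Gamma> N)"
  by (cases rule: provR.cases) auto
lemma provR_Blind: "provR ar pl R \<Gamma> (Blind M N) \<Longrightarrow> (\<exists>C\<in>ectx ar \<Gamma>. eqE pl R (Blind M N) C) \<or> (provR ar pl R \<Gamma> M \<and> provR ar pl R \<Gamma> N)"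
  by (cases rule: provR.cases) auto
lemma provR_Pub: "provR ar pl R \<Gamma> (Pub M) \<Longrightarrow> (\<exists>C\<in>ectx ar \<Gamma>. eqE pl R (Pub M) C)"
  by (cases rule: provR.cases) auto

lemma ctx_ok_insert: "ctx_ok ar pl R \<Gamma> \<Longrightarrow> nf ar pl R t \<Longrightarrow> ctx_ok ar pl R (insert t \<Gamma>)"
  unfolding ctx_ok_def by auto




context
  fixes ar :: "'f \<Rightarrow> nat" and pl :: "'f option" and R :: "('f etrm \<times> 'f etrm) set"
  assumes good: "good_theory ar pl R"
begin

abbreviation "PR \<equiv> provR ar pl R"
abbreviation "PL \<equiv> provL ar pl R"
abbreviation "NF \<equiv> nf ar pl R"
abbreviation "OK \<equiv> ctx_ok ar pl R"
abbreviation "AC \<equiv> ac_eq pl"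

lemma OK_sub: "OK \<Gamma> \<Longrightarrow> \<Gamma>' \<subseteq> \<Gamma> \<Longrightarrow> OK \<Gamma>'"
  unfolding ctx_ok_def using finite_subset by blast

lemma sub_lift: "\<exists>t\<in>insert M \<Gamma>. subterm g t \<Longrightarrow> subterm M P \<Longrightarrow> \<exists>t\<in>insert P \<Gamma>. subterm g t"
  using subterm_trans by blast

lemma comb: "P1 \<or> (\<exists>g. Q g \<and> Q' g \<and> (\<exists>t\<in>insert M \<Gamma>. subterm g t)) \<Longrightarrow>
  P2 \<or> (\<exists>g. Q g \<and> Q' g \<and> (\<exists>t\<in>insert N \<Gamma>. subterm g t)) \<Longrightarrow> (P1 \<Longrightarrow> P2 \<Longrightarrow> Z) \<Longrightarrow>
  subterm M X \<Longrightarrow> subterm N X \<Longrightarrow> Z \<or> (\<exists>g. Q g \<and> Q' g \<and> (\<exists>t\<in>insert X \<Gamma>. subterm g t))"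
  by (meson sub_lift)

lemma rcut:
  assumes A: "PR \<Gamma> A"
  shows "PR \<Delta> B \<Longrightarrow> \<Delta> \<subseteq> insert A \<Gamma> \<Longrightarrow>
     PR \<Gamma> B \<or> (\<exists>g. guarded g \<and> AC g A \<and> (\<exists>t\<in>insert B \<Gamma>. subterm g t))"
proof (induction rule: provR.induct)
  case (idR \<Delta> B C)
  have okG: "OK \<Gamma>" and nA: "NF A" using provR_ok[OF A] seq_ok_iff by blast+
  have nB: "NF B" using idR(1) seq_ok_iff by blast
  have sB: "seq_ok ar pl R \<Gamma> B" using okG nB seq_ok_iff by blast
  have C: "C \<in> ectx ar (insert A \<Gamma>)" using ectx_mono idR by blast
  show ?case
  proof (cases "\<exists>D\<in>ectx ar \<Gamma>. eqE pl R A D")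
    case True
    then obtain D where "D \<in> ectx ar \<Gamma>" "eqE pl R A D" by blast
    from esub[OF this(2,1) C] obtain C' where "C' \<in> ectx ar \<Gamma>" "eqE pl R C C'" by blast
    then have "PR \<Gamma> B" using provR.idR[OF sB] idR(3) eqE_trans by blast
    then show ?thesis ..
  next
    case False
    then have gA: "guarded A" using provR_cases_g[OF A] by blast
    show ?thesis
    proof (cases "\<exists>g. guarded g \<and> AC g A \<and> (\<exists>t\<in>insert B \<Gamma>. subterm g t)")
      case True then show ?thesis ..
    next
      case F2: False
      obtain X where X: "X \<in> ectx ar \<Gamma>" using provR_ectx_ne[OF A] by blast
      have noB: "\<forall>x. subterm x B \<longrightarrow> guarded x \<longrightarrow> \<not> AC x A" using F2 by (meson ac_eq_sym insertI1)
      have rB: "repl pl A X B = B" using repl_id[OF noB] .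
      have rG: "\<forall>t\<in>\<Gamma>. repl pl A X t = t"
        using F2 by (intro ballI repl_id) (meson ac_eq_sym insertI2)
      have rC: "repl pl A X C \<in> ectx ar \<Gamma>" using repl_ectx[OF C gA X rG] .
      have allnf: "\<forall>t\<in>insert A \<Gamma>. NF t" using okG nA unfolding ctx_ok_def by blast
      have wfB: "wf_trm ar B" using nB unfolding nf_def by blast
      have wfC: "wf_trm ar C" using ectx_wf[OF good C] allnf unfolding nf_def by blast
      have qB: "Qnf ar pl R B" using nf_Qnf[OF nB] .
      have qC: "Qnf ar pl R C" unfolding Qnf_def
        using ectx_subterm[OF good C] allnf nf_subterm by blast
      have "eqE pl R (repl pl A X B) (repl pl A X C)" using repl_eqE[OF good wfB wfC qB qC idR(3)] .
      then have "PR \<Gamma> B" using provR.idR[OF sB rC] rB by simp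
      then show ?thesis ..
    qed
  qed
next
  case (pR \<Delta> M N)
  have ok: "seq_ok ar pl R \<Gamma> (Pair M N)" using pR(1) provR_ok[OF A] seq_ok_iff by blast
  show ?case
    by (rule comb[OF pR.IH(1)[OF pR.prems] pR.IH(2)[OF pR.prems] provR.pR[OF ok]])
       (auto intro: subterm.intros)
next
  case (eR \<Delta> M N)
  have ok: "seq_ok ar pl R \<Gamma> (Enc M N)" using eR(1) provR_ok[OF A] seq_ok_iff by blast
  show ?case
    by (rule comb[OF eR.IH(1)[OF eR.prems] eR.IH(2)[OF eR.prems] provR.eR[OF ok]])
       (auto intro: subterm.intros)
next
  case (signR \<Delta> M N)
  have ok: "seq_ok ar pl R \<Gamma> (Sign M N)" using signR(1) provR_ok[OF A] seq_ok_iff by blast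
  show ?case
    by (rule comb[OF signR.IH(1)[OF signR.prems] signR.IH(2)[OF signR.prems] provR.signR[OF ok]])
       (auto intro: subterm.intros)
next
  case (blindR \<Delta> M N)
  have ok: "seq_ok ar pl R \<Gamma> (Blind M N)" using blindR(1) provR_ok[OF A] seq_ok_iff by blast
  show ?case
    by (rule comb[OF blindR.IH(1)[OF blindR.prems] blindR.IH(2)[OF blindR.prems] provR.blindR[OF ok]])
       (auto intro: subterm.intros)
qed

lemma rcut_ext:
  assumes A: "PR \<Gamma> A" and B: "PR \<Delta> B" and sub: "\<Delta> \<subseteq> insert A \<Gamma>"
  shows "PR \<Gamma> B \<or> (\<exists>g. guarded g \<and> AC g A \<and> (\<exists>t\<in>insert B \<Gamma>. subterm g t) \<and> PR \<Gamma> g \<and> PR (insert g \<Gamma>) B)"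
proof -
  have okG: "OK \<Gamma>" and nA: "NF A" using provR_ok[OF A] seq_ok_iff by blast+
  have nB: "NF B" using provR_ok[OF B] seq_ok_iff by blast
  from rcut[OF A B sub] show ?thesis
  proof
    assume "\<exists>g. guarded g \<and> AC g A \<and> (\<exists>t\<in>insert B \<Gamma>. subterm g t)"
    then obtain g where g: "guarded g" "AC g A" "\<exists>t\<in>insert B \<Gamma>. subterm g t" by blast
    have ng: "NF g" using g(3) okG nB nf_subterm unfolding ctx_ok_def by blast
    have "PR \<Gamma> g" using provR_ac[OF A ac_eq_sym[OF g(2)]] .
    moreover have "PR (insert g \<Gamma>) B"
    proof (rule rsubst[OF B])
      show "\<Delta> \<subseteq> insert A (insert g \<Gamma>)" using sub by blast
      show "eqE pl R A g" using ac_eq_eqE ac_eq_sym g(2) by blast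
      show "g \<in> ectx ar (insert g \<Gamma>)" by (rule ectx.hole) simp
      show "OK (insert g \<Gamma>)" using ctx_ok_insert[OF okG ng] .
    qed
    ultimately show ?thesis using g by blast
  qed blast
qed

lemma lp_mem: "Pair M N \<in> \<Gamma> \<Longrightarrow> seq_ok ar pl R \<Gamma> T \<Longrightarrow> PL (insert M (insert N \<Gamma>)) T \<Longrightarrow> PL \<Gamma> T"
  using provL.lp[of ar pl R M N \<Gamma> T] by (simp add: insert_absorb)

lemma le_mem: "Enc M K \<in> \<Gamma> \<Longrightarrow> seq_ok ar pl R \<Gamma> T \<Longrightarrow> PR \<Gamma> K \<Longrightarrow> PL (insert M (insert K \<Gamma>)) T \<Longrightarrow> PL \<Gamma> T"
  using provL.le[of ar pl R M K \<Gamma> T] by (simp add: insert_absorb)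

lemma sign_mem: "Sign M K \<in> \<Gamma> \<Longrightarrow> Pub L \<in> \<Gamma> \<Longrightarrow> AC K L \<Longrightarrow> seq_ok ar pl R \<Gamma> T \<Longrightarrow> PL (insert M \<Gamma>) T \<Longrightarrow> PL \<Gamma> T"
  using provL.sign[of ar pl R M K L \<Gamma> T] by (simp add: insert_absorb)

lemma blind1_mem: "Blind M K \<in> \<Gamma> \<Longrightarrow> seq_ok ar pl R \<Gamma> T \<Longrightarrow> PR \<Gamma> K \<Longrightarrow> PL (insert M (insert K \<Gamma>)) T \<Longrightarrow> PL \<Gamma> T"
  using provL.blind1[of ar pl R M K \<Gamma> T] by (simp add: insert_absorb)

lemma blind2_mem: "Sign (Blind M Rr) K \<in> \<Gamma> \<Longrightarrow> seq_ok ar pl R \<Gamma> T \<Longrightarrow> PR \<Gamma> Rr \<Longrightarrow> PL (insert (Sign M K) (insert Rr \<Gamma>)) T \<Longrightarrow> PL \<Gamma> T"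
  using provL.blind2[of ar pl R M Rr K \<Gamma> T] by (simp add: insert_absorb)

lemma ls_back: "PR \<Gamma> g \<Longrightarrow> guarded g \<Longrightarrow> (\<exists>t\<in>insert T \<Gamma>. subterm g t) \<Longrightarrow> PL (insert g \<Gamma>) T \<Longrightarrow> PL \<Gamma> T"
  using provL.ls[of ar pl R \<Gamma> T g] provL_ok provR_ok by (metis seq_ok_iff)

lemma provL_weak: "PL \<Gamma> T \<Longrightarrow> \<Gamma> \<subseteq> \<Gamma>' \<Longrightarrow> OK \<Gamma>' \<Longrightarrow> PL \<Gamma>' T"
proof (induction arbitrary: \<Gamma>' rule: provL.induct)
  case (r \<Gamma> M)
  then show ?case using provR_weak provL.r seq_ok_iff by metis
next
  case (lp M N \<Gamma> T)
  have nn: "NF M \<and> NF N" using provL_ok[OF lp(2)] unfolding seq_ok_def by auto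
  have okP: "OK (insert M (insert N \<Gamma>'))" using lp.prems(2) nn by (auto intro!: ctx_ok_insert)
  have sq: "seq_ok ar pl R \<Gamma>' T" using lp.prems(2) lp.hyps(1) by (simp add: seq_ok_iff)
  have "PL (insert M (insert N \<Gamma>')) T" by (rule lp.IH[OF _ okP]) (use lp.prems in auto)
  then show ?case using lp_mem[OF _ sq] lp.prems by blast
next
  case (le M K \<Gamma> N)
  have nn: "NF M \<and> NF K" using provL_ok[OF le(3)] unfolding seq_ok_def by auto
  have okP: "OK (insert M (insert K \<Gamma>'))" using le.prems(2) nn by (auto intro!: ctx_ok_insert)
  have sq: "seq_ok ar pl R \<Gamma>' N" using le.prems(2) le.hyps(1) by (simp add: seq_ok_iff)
  have "PL (insert M (insert K \<Gamma>')) N" by (rule le.IH[OF _ okP]) (use le.prems in auto)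
  moreover have "PR \<Gamma>' K" using provR_weak[OF le(2) le.prems(1,2)] .
  ultimately show ?case using le_mem[OF _ sq] le.prems by blast
next
  case (sign M K L \<Gamma> N)
  have nn: "NF M" using provL_ok[OF sign(3)] unfolding seq_ok_def by auto
  have okP: "OK (insert M \<Gamma>')" using sign.prems(2) nn by (auto intro!: ctx_ok_insert)
  have sq: "seq_ok ar pl R \<Gamma>' N" using sign.prems(2) sign.hyps(1) by (simp add: seq_ok_iff)
  have "PL (insert M \<Gamma>') N" by (rule sign.IH[OF _ okP]) (use sign.prems in auto)
  then show ?case using sign_mem[OF _ _ sign.hyps(2) sq] sign.prems by blast
next
  case (blind1 M K \<Gamma> N)
  have nn: "NF M \<and> NF K" using provL_ok[OF blind1(3)] unfolding seq_ok_def by auto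
  have okP: "OK (insert M (insert K \<Gamma>'))" using blind1.prems(2) nn by (auto intro!: ctx_ok_insert)
  have sq: "seq_ok ar pl R \<Gamma>' N" using blind1.prems(2) blind1.hyps(1) by (simp add: seq_ok_iff)
  have "PL (insert M (insert K \<Gamma>')) N" by (rule blind1.IH[OF _ okP]) (use blind1.prems in auto)
  moreover have "PR \<Gamma>' K" using provR_weak[OF blind1(2) blind1.prems(1,2)] .
  ultimately show ?case using blind1_mem[OF _ sq] blind1.prems by blast
next
  case (blind2 M Rr K \<Gamma> N)
  have nn: "NF (Sign M K) \<and> NF Rr" using provL_ok[OF blind2(3)] unfolding seq_ok_def by auto
  have okP: "OK (insert (Sign M K) (insert Rr \<Gamma>'))" using blind2.prems(2) nn by (auto intro!: ctx_ok_insert)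
  have sq: "seq_ok ar pl R \<Gamma>' N" using blind2.prems(2) blind2.hyps(1) by (simp add: seq_ok_iff)
  have "PL (insert (Sign M K) (insert Rr \<Gamma>')) N" by (rule blind2.IH[OF _ okP]) (use blind2.prems in auto)
  moreover have "PR \<Gamma>' Rr" using provR_weak[OF blind2(2) blind2.prems(1,2)] .
  ultimately show ?case using blind2_mem[OF _ sq] blind2.prems by blast
next
  case (ls \<Gamma> M A)
  have nA: "NF A" using provR_ok[OF ls(4)] seq_ok_iff by blast
  have okP: "OK (insert A \<Gamma>')" using ctx_ok_insert[OF ls.prems(2) nA] .
  have "PL (insert A \<Gamma>') M" by (rule ls.IH[OF _ okP]) (use ls.prems in auto)
  moreover have "PR \<Gamma>' A" using provR_weak[OF ls(4) ls.prems(1,2)] .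
  moreover have "\<exists>t\<in>insert M \<Gamma>'. subterm A t" using ls.hyps(3) ls.prems(1) by blast
  ultimately show ?case using ls_back ls.hyps(2) by blast
qed


lemma OK_mem: "OK \<Gamma> \<Longrightarrow> x \<in> \<Gamma> \<Longrightarrow> NF x"
  unfolding ctx_ok_def by blast

lemma mem_ac_PR: "OK \<Gamma> \<Longrightarrow> NF x \<Longrightarrow> y \<in> \<Gamma> \<Longrightarrow> AC x y \<Longrightarrow> PR \<Gamma> x"
  by (rule provR.idR[of ar pl R \<Gamma> x y]) (auto simp: seq_ok_iff intro: ectx.hole ac_eq_eqE)

lemma found: "PR \<Gamma> A \<Longrightarrow> \<exists>C\<in>ectx ar \<Gamma>. eqE pl R A C \<Longrightarrow> guarded A \<Longrightarrow>
   \<exists>g. guarded g \<and> (\<exists>t\<in>\<Gamma>. subterm g t) \<and> AC A g \<and> PR \<Gamma> g \<and> NF g"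
proof -
  assume A: "PR \<Gamma> A" and C: "\<exists>C\<in>ectx ar \<Gamma>. eqE pl R A C" and g: "guarded A"
  then obtain C where "C \<in> ectx ar \<Gamma>" "eqE pl R A C" by blast
  from alien[OF good provR_ok[OF A] g this] obtain t g where
    tg: "t \<in> \<Gamma>" "subterm g t" "guarded g" "AC A g" by blast
  have "NF g" using tg provR_ok[OF A] nf_subterm unfolding seq_ok_def by blast
  moreover have "PR \<Gamma> g" using provR_ac[OF A tg(4)] .
  ultimately show ?thesis using tg by blast
qed

lemma ls_found: "guarded g \<Longrightarrow> \<exists>t\<in>\<Gamma>. subterm g t \<Longrightarrow> PR \<Gamma> g \<Longrightarrow> PL (insert g \<Gamma>) T \<Longrightarrow> PL \<Gamma> T"
  using ls_back by blast

lemma side: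
  assumes A: "PR \<Gamma> A" and K: "PR \<Delta> K" and sub: "\<Delta> \<subseteq> insert A \<Gamma>" and st: "\<exists>t\<in>\<Gamma>. subterm K t"
  shows "\<exists>\<Gamma>1. (\<forall>T. PL \<Gamma>1 T \<longrightarrow> PL \<Gamma> T) \<and> OK \<Gamma>1 \<and> PR \<Gamma>1 K \<and> \<Gamma> \<subseteq> \<Gamma>1"
proof -
  have okG: "OK \<Gamma>" using provR_ok[OF A] seq_ok_iff by blast
  from rcut_ext[OF A K sub] show ?thesis
  proof
    assume "PR \<Gamma> K" then show ?thesis using okG by blast
  next
    assume "\<exists>g. guarded g \<and> AC g A \<and> (\<exists>t\<in>insert K \<Gamma>. subterm g t) \<and> PR \<Gamma> g \<and> PR (insert g \<Gamma>) K"
    then obtain g where g: "guarded g" "\<exists>t\<in>insert K \<Gamma>. subterm g t" "PR \<Gamma> g" "PR (insert g \<Gamma>) K" by blast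
    have g2: "\<exists>t\<in>\<Gamma>. subterm g t" using g(2) st subterm_trans by blast
    have "\<forall>T. PL (insert g \<Gamma>) T \<longrightarrow> PL \<Gamma> T" using ls_found[OF g(1) g2 g(3)] by blast
    moreover have "OK (insert g \<Gamma>)" using provR_ok[OF g(4)] seq_ok_iff by blast
    ultimately show ?thesis using g(4) by blast
  qed
qed

lemma nf_Pair: "NF (Pair a b) \<Longrightarrow> NF a \<and> NF b"
  using nf_subterm[of ar pl R "Pair a b" a] nf_subterm[of ar pl R "Pair a b" b]
    subterm.pair1[OF subterm.refl] subterm.pair2[OF subterm.refl] by blast

lemma nf_Enc: "NF (Enc a b) \<Longrightarrow> NF a \<and> NF b"
  using nf_subterm[of ar pl R "Enc a b" a] nf_subterm[of ar pl R "Enc a b" b]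
    subterm.enc1[OF subterm.refl] subterm.enc2[OF subterm.refl] by blast

lemma nf_Sign: "NF (Sign a b) \<Longrightarrow> NF a \<and> NF b"
  using nf_subterm[of ar pl R "Sign a b" a] nf_subterm[of ar pl R "Sign a b" b]
    subterm.sign1[OF subterm.refl] subterm.sign2[OF subterm.refl] by blast

lemma nf_Blind: "NF (Blind a b) \<Longrightarrow> NF a \<and> NF b"
  using nf_subterm[of ar pl R "Blind a b" a] nf_subterm[of ar pl R "Blind a b" b]
    subterm.blind1[OF subterm.refl] subterm.blind2[OF subterm.refl] by blast

lemma nf_Pub: "NF (Pub a) \<Longrightarrow> NF a"
  using nf_subterm[of ar pl R "Pub a" a] subterm.pub[OF subterm.refl] by blast

lemma core: "PR \<Gamma> A \<Longrightarrow> PL \<Delta> T \<Longrightarrow> \<Delta> \<subseteq> insert A \<Gamma> \<Longrightarrow> PL \<Gamma> T"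
proof (induction "size A" arbitrary: A \<Gamma> \<Delta> T rule: less_induct)
  case less
  have rm: "\<And>M \<Gamma> T. size M < size A \<Longrightarrow> PR \<Gamma> M \<Longrightarrow> PL (insert M \<Gamma>) T \<Longrightarrow> PL \<Gamma> T"
    using less.hyps by blast
  have rm2: "\<And>M N \<Gamma> T. size M < size A \<Longrightarrow> size N < size A \<Longrightarrow> PR \<Gamma> M \<Longrightarrow> PR \<Gamma> N \<Longrightarrow>
      PL (insert M (insert N \<Gamma>)) T \<Longrightarrow> PL \<Gamma> T"
  proof -
    fix M N \<Gamma> T
    assume a: "size M < size A" "size N < size A" "PR \<Gamma> M" "PR \<Gamma> N" "PL (insert M (insert N \<Gamma>)) T"
    have okN: "OK (insert N \<Gamma>)" using provR_ok[OF a(4)] seq_ok_iff ctx_ok_insert by blast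
    have "PR (insert N \<Gamma>) M" using provR_weak[OF a(3) _ okN] by blast
    then have "PL (insert N \<Gamma>) T" using rm[OF a(1)] a(5) by blast
    then show "PL \<Gamma> T" using rm[OF a(2) a(4)] by blast
  qed
  show ?case using less.prems(2,3,1)
  proof (induction arbitrary: \<Gamma> rule: provL.induct)
    case (r \<Delta> T)
    have A: "PR \<Gamma> A" using r.prems by blast
    have okG: "OK \<Gamma>" using provR_ok[OF A] seq_ok_iff by blast
    have sT: "seq_ok ar pl R \<Gamma> T" using okG r.hyps(1) seq_ok_iff by blast
    from rcut_ext[OF A r.hyps(2) r.prems(1)] show ?case
    proof
      assume "PR \<Gamma> T" then show ?thesis using provL.r[OF sT] by blast
    next
      assume "\<exists>g. guarded g \<and> AC g A \<and> (\<exists>t\<in>insert T \<Gamma>. subterm g t) \<and> PR \<Gamma> g \<and> PR (insert g \<Gamma>) T"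
      then obtain g where g: "guarded g" "\<exists>t\<in>insert T \<Gamma>. subterm g t" "PR \<Gamma> g" "PR (insert g \<Gamma>) T" by blast
      have "PL (insert g \<Gamma>) T" using provL.r[OF provR_ok[OF g(4)] g(4)] .
      then show ?thesis using ls_back[OF g(3,1,2)] by blast
    qed
  next
    case (lp M N \<Delta>0 T)
    have A: "PR \<Gamma> A" and sub: "insert (Pair M N) \<Delta>0 \<subseteq> insert A \<Gamma>" using lp.prems by auto
    have okG: "OK \<Gamma>" and nA: "NF A" using provR_ok[OF A] seq_ok_iff by blast+
    have nT: "NF T" using lp.hyps(1) seq_ok_iff by blast
    have sT: "\<And>G. OK G \<Longrightarrow> seq_ok ar pl R G T" using nT seq_ok_iff by blast
    have nMN: "NF M" "NF N" using provL_ok[OF lp.hyps(2)] unfolding seq_ok_def by auto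
    have IH': "\<And>G. \<Gamma> \<subseteq> G \<Longrightarrow> OK G \<Longrightarrow> insert (Pair M N) (insert M (insert N \<Delta>0)) \<subseteq> insert A G \<Longrightarrow> PL G T"
    proof -
      fix G assume a: "\<Gamma> \<subseteq> G" "OK G" "insert (Pair M N) (insert M (insert N \<Delta>0)) \<subseteq> insert A G"
      show "PL G T" by (rule lp.IH[OF a(3) provR_weak[OF A a(1,2)]])
    qed
    show ?case
    proof (cases "Pair M N \<in> \<Gamma>")
      case True
      have ok: "OK (insert M (insert N \<Gamma>))" using okG nMN by (auto intro!: ctx_ok_insert)
      have "PL (insert M (insert N \<Gamma>)) T" by (rule IH'[OF _ ok]) (use sub True in auto)
      then show ?thesis using lp_mem[OF True sT[OF okG]] by blast
    next
      case False
      then have PA: "Pair M N = A" using sub by blast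
      from provR_Pair[OF A[folded PA]] show ?thesis
      proof
        assume "PR \<Gamma> M \<and> PR \<Gamma> N"
        have ok: "OK (insert M (insert N \<Gamma>))" using okG nMN by (auto intro!: ctx_ok_insert)
        have "PL (insert M (insert N \<Gamma>)) T" by (rule IH'[OF _ ok]) (use sub PA in auto)
        then show ?thesis using rm2[of M N \<Gamma> T] PA \<open>PR \<Gamma> M \<and> PR \<Gamma> N\<close> by auto
      next
        assume "\<exists>C\<in>ectx ar \<Gamma>. eqE pl R (Pair M N) C"
        from found[OF A[folded PA] this] obtain g where
          g: "guarded g" "\<exists>t\<in>\<Gamma>. subterm g t" "AC (Pair M N) g" "PR \<Gamma> g" "NF g" by auto
        obtain M' N' where gg: "g = Pair M' N'" "AC M M'" "AC N N'" using ac_eq_Pair[OF g(3)] by (elim exE conjE) simp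
        have nM': "NF M'" "NF N'" using nf_Pair[OF g(5)[unfolded gg(1)]] by auto
        let ?G1 = "insert g \<Gamma>"
        let ?G2 = "insert M' (insert N' ?G1)"
        have ok1: "OK ?G1" using okG g(5) by (auto intro!: ctx_ok_insert)
        have ok2: "OK ?G2" using ok1 nM' by (auto intro!: ctx_ok_insert)
        have ok3: "OK (insert M (insert N ?G2))" using ok2 nMN by (auto intro!: ctx_ok_insert)
        have "PL (insert M (insert N ?G2)) T" by (rule IH'[OF _ ok3]) (use sub PA in auto)
        moreover have "PR ?G2 M" using mem_ac_PR[OF ok2 nMN(1) _ gg(2)] by blast
        moreover have "PR ?G2 N" using mem_ac_PR[OF ok2 nMN(2) _ gg(3)] by blast
        ultimately have "PL ?G2 T" using rm2[of M N ?G2 T] PA by auto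
        then have "PL ?G1 T" using lp_mem[OF _ sT[OF ok1]] gg(1) by blast
        then show ?thesis using ls_found[OF g(1,2,4)] by blast
      qed
    qed
  next
    case (ls \<Delta> T A')
    have A: "PR \<Gamma> A" and sub: "\<Delta> \<subseteq> insert A \<Gamma>" using ls.prems by auto
    have okG: "OK \<Gamma>" and nA: "NF A" using provR_ok[OF A] seq_ok_iff by blast+
    have nA': "NF A'" using provR_ok[OF ls.hyps(4)] seq_ok_iff by blast
    show ?case
    proof (cases "A' = A")
      case True
      show ?thesis by (rule ls.IH) (use sub True A in auto)
    next
      case False
      have key: "\<And>G. \<Gamma> \<subseteq> G \<Longrightarrow> OK G \<Longrightarrow> PR G A' \<Longrightarrow> PL G T"
      proof -
        fix G assume a: "\<Gamma> \<subseteq> G" "OK G" "PR G A'"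
        have okG': "OK (insert A' G)" using ctx_ok_insert[OF a(2) nA'] .
        have "PL (insert A' G) T"
          by (rule ls.IH) (use sub a(1) provR_weak[OF A _ okG'] in auto)
        show "PL G T"
        proof (cases "\<exists>t\<in>insert T G. subterm A' t")
          case True
          then show ?thesis using ls_back[OF a(3) ls.hyps(2)] \<open>PL (insert A' G) T\<close> by blast
        next
          case F: False
          then have "subterm A' A" using ls.hyps(3) sub a(1) by blast
          then have "size A' < size A" using False subterm_size_cases by blast
          then show ?thesis using rm[OF _ a(3)] \<open>PL (insert A' G) T\<close> by blast
        qed
      qed
      from rcut_ext[OF A ls.hyps(4) sub] show ?thesis
      proof
        assume "PR \<Gamma> A'" then show ?thesis using key[OF _ okG] by blast
      next
        assume "\<exists>g. guarded g \<and> AC g A \<and> (\<exists>t\<in>insert A' \<Gamma>. subterm g t) \<and> PR \<Gamma> g \<and> PR (insert g \<Gamma>) A'"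
        then obtain g where g: "guarded g" "AC g A" "\<exists>t\<in>insert A' \<Gamma>. subterm g t" "PR \<Gamma> g" "PR (insert g \<Gamma>) A'"
          by blast
        have g2: "\<exists>t\<in>insert T \<Gamma>. subterm g t"
        proof (cases "subterm g A'")
          case True
          from ls.hyps(3) obtain t where t: "t \<in> insert T \<Delta>" "subterm A' t" by blast
          show ?thesis
          proof (cases "t = A")
            case True
            have "size A' < size A" using t(2) True False subterm_size_cases by blast
            moreover have "size g \<le> size A'" using subterm_size[OF \<open>subterm g A'\<close>] .
            moreover have "size g = size A" using ac_eq_size[OF g(2)] .
            ultimately show ?thesis by simp
          next
            case False
            then have "t \<in> insert T \<Gamma>" using t(1) sub by blast
            then show ?thesis using t(2) \<open>subterm g A'\<close> subterm_trans by blast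
          qed
        next
          case False then show ?thesis using g(3) by blast
        qed
        have okg: "OK (insert g \<Gamma>)" using provR_ok[OF g(5)] seq_ok_iff by blast
        have "PL (insert g \<Gamma>) T" using key[OF _ okg g(5)] by blast
        then show ?thesis using ls_back[OF g(4,1) g2] by blast
      qed
    qed
  next
    case (le M K \<Delta>0 T)
    have A: "PR \<Gamma> A" and sub: "insert (Enc M K) \<Delta>0 \<subseteq> insert A \<Gamma>" using le.prems by auto
    have okG: "OK \<Gamma>" and nA: "NF A" using provR_ok[OF A] seq_ok_iff by blast+
    have nT: "NF T" using le.hyps(1) seq_ok_iff by blast
    have sT: "\<And>G. OK G \<Longrightarrow> seq_ok ar pl R G T" using nT seq_ok_iff by blast
    have nMK: "NF M" "NF K" using provL_ok[OF le.hyps(3)] unfolding seq_ok_def by auto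
    have IH': "\<And>G. \<Gamma> \<subseteq> G \<Longrightarrow> OK G \<Longrightarrow> insert (Enc M K) (insert M (insert K \<Delta>0)) \<subseteq> insert A G \<Longrightarrow> PL G T"
    proof -
      fix G assume a: "\<Gamma> \<subseteq> G" "OK G" "insert (Enc M K) (insert M (insert K \<Delta>0)) \<subseteq> insert A G"
      show "PL G T" by (rule le.IH[OF a(3) provR_weak[OF A a(1,2)]])
    qed
    show ?case
    proof (cases "Enc M K \<in> \<Gamma>")
      case True
      have st: "\<exists>t\<in>\<Gamma>. subterm K t" using True subterm.enc2[OF subterm.refl] by blast
      from side[OF A le.hyps(2) sub st] obtain G1 where
        G1: "\<forall>T. PL G1 T \<longrightarrow> PL \<Gamma> T" "OK G1" "PR G1 K" "\<Gamma> \<subseteq> G1" by blast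
      have ok: "OK (insert M (insert K G1))" using G1(2) nMK by (auto intro!: ctx_ok_insert)
      have "PL (insert M (insert K G1)) T" by (rule IH'[OF _ ok]) (use sub True G1(4) in auto)
      then have "PL G1 T" using le_mem[OF _ sT[OF G1(2)] G1(3)] True G1(4) by blast
      then show ?thesis using G1(1) by blast
    next
      case False
      then have PA: "Enc M K = A" using sub by blast
      from provR_Enc[OF A[folded PA]] show ?thesis
      proof
        assume "PR \<Gamma> M \<and> PR \<Gamma> K"
        have ok: "OK (insert M (insert K \<Gamma>))" using okG nMK by (auto intro!: ctx_ok_insert)
        have "PL (insert M (insert K \<Gamma>)) T" by (rule IH'[OF _ ok]) (use sub PA in auto)
        then show ?thesis using rm2[of M K \<Gamma> T] PA \<open>PR \<Gamma> M \<and> PR \<Gamma> K\<close> by auto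
      next
        assume "\<exists>C\<in>ectx ar \<Gamma>. eqE pl R (Enc M K) C"
        from found[OF A[folded PA] this] obtain g where
          g: "guarded g" "\<exists>t\<in>\<Gamma>. subterm g t" "AC (Enc M K) g" "PR \<Gamma> g" "NF g" by auto
        obtain M' K' where gg: "g = Enc M' K'" "AC M M'" "AC K K'" using ac_eq_Enc[OF g(3)] by (elim exE conjE) simp
        have nM': "NF M'" "NF K'" using nf_Enc[OF g(5)[unfolded gg(1)]] by auto
        let ?G1 = "insert g \<Gamma>"
        let ?G2 = "insert M' (insert K' ?G1)"
        have ok1: "OK ?G1" using okG g(5) by (auto intro!: ctx_ok_insert)
        have ok2: "OK ?G2" using ok1 nM' by (auto intro!: ctx_ok_insert)
        have ok3: "OK (insert M (insert K ?G2))" using ok2 nMK by (auto intro!: ctx_ok_insert)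
        have "PR ?G1 K"
        proof (rule rsubst[OF le.hyps(2)])
          show "insert (Enc M K) \<Delta>0 \<subseteq> insert A ?G1" using sub by blast
          show "eqE pl R A g" using ac_eq_eqE g(3) PA by blast
          show "g \<in> ectx ar ?G1" by (rule ectx.hole) simp
        qed (rule ok1)
        then have sideK: "PR ?G1 K'" using provR_ac gg(3) by blast
        have "PL (insert M (insert K ?G2)) T" by (rule IH'[OF _ ok3]) (use sub PA in auto)
        moreover have "PR ?G2 M" using mem_ac_PR[OF ok2 nMK(1) _ gg(2)] by blast
        moreover have "PR ?G2 K" using mem_ac_PR[OF ok2 nMK(2) _ gg(3)] by blast
        ultimately have "PL ?G2 T" using rm2[of M K ?G2 T] PA by auto
        then have "PL ?G1 T" using le_mem[OF _ sT[OF ok1] sideK] gg(1) by blast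
        then show ?thesis using ls_found[OF g(1,2,4)] by blast
      qed
    qed
  next
    case (sign M K L \<Delta>0 T)
    have A: "PR \<Gamma> A" and sub: "insert (Sign M K) (insert (Pub L) \<Delta>0) \<subseteq> insert A \<Gamma>" using sign.prems by auto
    have okG: "OK \<Gamma>" and nA: "NF A" using provR_ok[OF A] seq_ok_iff by blast+
    have nT: "NF T" using sign.hyps(1) seq_ok_iff by blast
    have sT: "\<And>G. OK G \<Longrightarrow> seq_ok ar pl R G T" using nT seq_ok_iff by blast
    have nM: "NF M" using provL_ok[OF sign.hyps(3)] unfolding seq_ok_def by auto
    have IH': "\<And>G. \<Gamma> \<subseteq> G \<Longrightarrow> OK G \<Longrightarrow> insert (Sign M K) (insert (Pub L) (insert M \<Delta>0)) \<subseteq> insert A G \<Longrightarrow> PL G T"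
    proof -
      fix G assume a: "\<Gamma> \<subseteq> G" "OK G" "insert (Sign M K) (insert (Pub L) (insert M \<Delta>0)) \<subseteq> insert A G"
      show "PL G T" by (rule sign.IH[OF a(3) provR_weak[OF A a(1,2)]])
    qed
    show ?case
    proof (cases "Sign M K \<in> \<Gamma>")
      case True
      show ?thesis
      proof (cases "Pub L \<in> \<Gamma>")
        case True2: True
        have ok: "OK (insert M \<Gamma>)" using okG nM by (auto intro!: ctx_ok_insert)
        have "PL (insert M \<Gamma>) T" by (rule IH'[OF _ ok]) (use sub True in auto)
        then show ?thesis using sign_mem[OF True True2 sign.hyps(2) sT[OF okG]] by blast
      next
        case False
        then have PA: "Pub L = A" using sub by blast
        from provR_Pub[OF A[folded PA]] have "\<exists>C\<in>ectx ar \<Gamma>. eqE pl R (Pub L) C" .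
        from found[OF A[folded PA] this] obtain g where
          g: "guarded g" "\<exists>t\<in>\<Gamma>. subterm g t" "AC (Pub L) g" "PR \<Gamma> g" "NF g" by auto
        obtain L' where gg: "g = Pub L'" "AC L L'" using ac_eq_Pub[OF g(3)] by (elim exE conjE) simp
        let ?G1 = "insert g \<Gamma>"
        have ok1: "OK ?G1" using okG g(5) by (auto intro!: ctx_ok_insert)
        have ok2: "OK (insert M ?G1)" using ok1 nM by (auto intro!: ctx_ok_insert)
        have "PL (insert M ?G1) T" by (rule IH'[OF _ ok2]) (use sub PA True in auto)
        moreover have "AC K L'" using ac_eq_trans[OF sign.hyps(2) gg(2)] .
        ultimately have "PL ?G1 T" using sign_mem[OF _ _ _ sT[OF ok1]] True gg(1) by blast
        then show ?thesis using ls_found[OF g(1,2,4)] by blast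
      qed
    next
      case False
      then have PA: "Sign M K = A" using sub by blast
      have PubG: "Pub L \<in> \<Gamma>" using sub PA by blast
      from provR_Sign[OF A[folded PA]] show ?thesis
      proof
        assume "PR \<Gamma> M \<and> PR \<Gamma> K"
        have ok: "OK (insert M \<Gamma>)" using okG nM by (auto intro!: ctx_ok_insert)
        have "PL (insert M \<Gamma>) T" by (rule IH'[OF _ ok]) (use sub PA PubG in auto)
        then show ?thesis using rm[of M \<Gamma> T] PA \<open>PR \<Gamma> M \<and> PR \<Gamma> K\<close> by auto
      next
        assume "\<exists>C\<in>ectx ar \<Gamma>. eqE pl R (Sign M K) C"
        from found[OF A[folded PA] this] obtain g where
          g: "guarded g" "\<exists>t\<in>\<Gamma>. subterm g t" "AC (Sign M K) g" "PR \<Gamma> g" "NF g" by auto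
        obtain M' K' where gg: "g = Sign M' K'" "AC M M'" "AC K K'" using ac_eq_Sign[OF g(3)] by (elim exE conjE) simp
        have nM': "NF M'" using nf_Sign[OF g(5)[unfolded gg(1)]] by auto
        let ?G1 = "insert g \<Gamma>"
        let ?G2 = "insert M' ?G1"
        have ok1: "OK ?G1" using okG g(5) by (auto intro!: ctx_ok_insert)
        have ok2: "OK ?G2" using ok1 nM' by (auto intro!: ctx_ok_insert)
        have ok3: "OK (insert M ?G2)" using ok2 nM by (auto intro!: ctx_ok_insert)
        have "PL (insert M ?G2) T" by (rule IH'[OF _ ok3]) (use sub PA PubG in auto)
        moreover have "PR ?G2 M" using mem_ac_PR[OF ok2 nM _ gg(2)] by blast
        ultimately have "PL ?G2 T" using rm[of M ?G2 T] PA by auto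
        moreover have "AC K' L" using ac_eq_trans[OF ac_eq_sym[OF gg(3)] sign.hyps(2)] .
        ultimately have "PL ?G1 T" using sign_mem[OF _ _ _ sT[OF ok1]] PubG gg(1) by blast
        then show ?thesis using ls_found[OF g(1,2,4)] by blast
      qed
    qed
  next
    case (blind1 M K \<Delta>0 T)
    have A: "PR \<Gamma> A" and sub: "insert (Blind M K) \<Delta>0 \<subseteq> insert A \<Gamma>" using blind1.prems by auto
    have okG: "OK \<Gamma>" and nA: "NF A" using provR_ok[OF A] seq_ok_iff by blast+
    have nT: "NF T" using blind1.hyps(1) seq_ok_iff by blast
    have sT: "\<And>G. OK G \<Longrightarrow> seq_ok ar pl R G T" using nT seq_ok_iff by blast
    have nMK: "NF M" "NF K" using provL_ok[OF blind1.hyps(3)] unfolding seq_ok_def by auto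
    have IH': "\<And>G. \<Gamma> \<subseteq> G \<Longrightarrow> OK G \<Longrightarrow> insert (Blind M K) (insert M (insert K \<Delta>0)) \<subseteq> insert A G \<Longrightarrow> PL G T"
    proof -
      fix G assume a: "\<Gamma> \<subseteq> G" "OK G" "insert (Blind M K) (insert M (insert K \<Delta>0)) \<subseteq> insert A G"
      show "PL G T" by (rule blind1.IH[OF a(3) provR_weak[OF A a(1,2)]])
    qed
    show ?case
    proof (cases "Blind M K \<in> \<Gamma>")
      case True
      have st: "\<exists>t\<in>\<Gamma>. subterm K t" using True subterm.blind2[OF subterm.refl] by blast
      from side[OF A blind1.hyps(2) sub st] obtain G1 where
        G1: "\<forall>T. PL G1 T \<longrightarrow> PL \<Gamma> T" "OK G1" "PR G1 K" "\<Gamma> \<subseteq> G1" by blast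
      have ok: "OK (insert M (insert K G1))" using G1(2) nMK by (auto intro!: ctx_ok_insert)
      have "PL (insert M (insert K G1)) T" by (rule IH'[OF _ ok]) (use sub True G1(4) in auto)
      then have "PL G1 T" using blind1_mem[OF _ sT[OF G1(2)] G1(3)] True G1(4) by blast
      then show ?thesis using G1(1) by blast
    next
      case False
      then have PA: "Blind M K = A" using sub by blast
      from provR_Blind[OF A[folded PA]] show ?thesis
      proof
        assume "PR \<Gamma> M \<and> PR \<Gamma> K"
        have ok: "OK (insert M (insert K \<Gamma>))" using okG nMK by (auto intro!: ctx_ok_insert)
        have "PL (insert M (insert K \<Gamma>)) T" by (rule IH'[OF _ ok]) (use sub PA in auto)
        then show ?thesis using rm2[of M K \<Gamma> T] PA \<open>PR \<Gamma> M \<and> PR \<Gamma> K\<close> by auto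
      next
        assume "\<exists>C\<in>ectx ar \<Gamma>. eqE pl R (Blind M K) C"
        from found[OF A[folded PA] this] obtain g where
          g: "guarded g" "\<exists>t\<in>\<Gamma>. subterm g t" "AC (Blind M K) g" "PR \<Gamma> g" "NF g" by auto
        obtain M' K' where gg: "g = Blind M' K'" "AC M M'" "AC K K'" using ac_eq_Blind[OF g(3)] by (elim exE conjE) simp
        have nM': "NF M'" "NF K'" using nf_Blind[OF g(5)[unfolded gg(1)]] by auto
        let ?G1 = "insert g \<Gamma>"
        let ?G2 = "insert M' (insert K' ?G1)"
        have ok1: "OK ?G1" using okG g(5) by (auto intro!: ctx_ok_insert)
        have ok2: "OK ?G2" using ok1 nM' by (auto intro!: ctx_ok_insert)
        have ok3: "OK (insert M (insert K ?G2))" using ok2 nMK by (auto intro!: ctx_ok_insert)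
        have "PR ?G1 K"
        proof (rule rsubst[OF blind1.hyps(2)])
          show "insert (Blind M K) \<Delta>0 \<subseteq> insert A ?G1" using sub by blast
          show "eqE pl R A g" using ac_eq_eqE g(3) PA by blast
          show "g \<in> ectx ar ?G1" by (rule ectx.hole) simp
        qed (rule ok1)
        then have sideK: "PR ?G1 K'" using provR_ac gg(3) by blast
        have "PL (insert M (insert K ?G2)) T" by (rule IH'[OF _ ok3]) (use sub PA in auto)
        moreover have "PR ?G2 M" using mem_ac_PR[OF ok2 nMK(1) _ gg(2)] by blast
        moreover have "PR ?G2 K" using mem_ac_PR[OF ok2 nMK(2) _ gg(3)] by blast
        ultimately have "PL ?G2 T" using rm2[of M K ?G2 T] PA by auto
        then have "PL ?G1 T" using blind1_mem[OF _ sT[OF ok1] sideK] gg(1) by blast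
        then show ?thesis using ls_found[OF g(1,2,4)] by blast
      qed
    qed
  next
    case (blind2 M Rr K \<Delta>0 T)
    let ?P = "Sign (Blind M Rr) K"
    have A: "PR \<Gamma> A" and sub: "insert ?P \<Delta>0 \<subseteq> insert A \<Gamma>" using blind2.prems by auto
    have okG: "OK \<Gamma>" and nA: "NF A" using provR_ok[OF A] seq_ok_iff by blast+
    have nT: "NF T" using blind2.hyps(1) seq_ok_iff by blast
    have sT: "\<And>G. OK G \<Longrightarrow> seq_ok ar pl R G T" using nT seq_ok_iff by blast
    have nSR: "NF (Sign M K)" "NF Rr" using provL_ok[OF blind2.hyps(3)] unfolding seq_ok_def by auto
    have IH': "\<And>G. \<Gamma> \<subseteq> G \<Longrightarrow> OK G \<Longrightarrow> insert ?P (insert (Sign M K) (insert Rr \<Delta>0)) \<subseteq> insert A G \<Longrightarrow> PL G T"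
    proof -
      fix G assume a: "\<Gamma> \<subseteq> G" "OK G" "insert ?P (insert (Sign M K) (insert Rr \<Delta>0)) \<subseteq> insert A G"
      show "PL G T" by (rule blind2.IH[OF a(3) provR_weak[OF A a(1,2)]])
    qed
    show ?case
    proof (cases "?P \<in> \<Gamma>")
      case True
      have st: "\<exists>t\<in>\<Gamma>. subterm Rr t" using True subterm.sign1[OF subterm.blind2[OF subterm.refl]] by blast
      from side[OF A blind2.hyps(2) sub st] obtain G1 where
        G1: "\<forall>T. PL G1 T \<longrightarrow> PL \<Gamma> T" "OK G1" "PR G1 Rr" "\<Gamma> \<subseteq> G1" by blast
      have ok: "OK (insert (Sign M K) (insert Rr G1))" using G1(2) nSR by (auto intro!: ctx_ok_insert)
      have "PL (insert (Sign M K) (insert Rr G1)) T" by (rule IH'[OF _ ok]) (use sub True G1(4) in auto)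
      then have "PL G1 T" using blind2_mem[OF _ sT[OF G1(2)] G1(3)] True G1(4) by blast
      then show ?thesis using G1(1) by blast
    next
      case False
      then have PA: "?P = A" using sub by blast
      have szS: "size (Sign M K) < size A" and szR: "size Rr < size A" using PA by auto
      have routeX: "\<And>g. guarded g \<Longrightarrow> \<exists>t\<in>\<Gamma>. subterm g t \<Longrightarrow> AC A g \<Longrightarrow> PR \<Gamma> g \<Longrightarrow> PL \<Gamma> T"
      proof -
        fix g assume g: "guarded g" "\<exists>t\<in>\<Gamma>. subterm g t" "AC A g" "PR \<Gamma> g"
        have ng: "NF g" using g(2) okG nf_subterm OK_mem by blast
        obtain b K' where g1: "g = Sign b K'" "AC (Blind M Rr) b" "AC K K'"
          using ac_eq_Sign[OF g(3)[folded PA]] by (elim exE conjE) simp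
        obtain M' R' where g2: "b = Blind M' R'" "AC M M'" "AC Rr R'"
          using ac_eq_Blind[OF g1(2)] by (elim exE conjE) simp
        let ?G1 = "insert g \<Gamma>"
        have ok1: "OK ?G1" using okG ng by (auto intro!: ctx_ok_insert)
        have "PR ?G1 Rr"
        proof (rule rsubst[OF blind2.hyps(2)])
          show "insert ?P \<Delta>0 \<subseteq> insert A ?G1" using sub by blast
          show "eqE pl R A g" using ac_eq_eqE g(3) by blast
          show "g \<in> ectx ar ?G1" by (rule ectx.hole) simp
        qed (rule ok1)
        then have sideR: "PR ?G1 R'" using provR_ac g2(3) by blast
        have acS: "AC (Sign M K) (Sign M' K')"
          using ac_eq_trans[OF ac_eq_ctx[OF ctx_Sign1 g2(2)] ac_eq_ctx[OF ctx_Sign2 g1(3)]] .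
        have nS': "NF (Sign M' K')" using nf_ac[OF nSR(1) acS] .
        have nR': "NF R'" using nf_ac[OF nSR(2) g2(3)] .
        let ?G2 = "insert (Sign M' K') (insert R' ?G1)"
        have ok2: "OK ?G2" using ok1 nS' nR' by (auto intro!: ctx_ok_insert)
        have ok3: "OK (insert (Sign M K) (insert Rr ?G2))" using ok2 nSR by (auto intro!: ctx_ok_insert)
        have "PL (insert (Sign M K) (insert Rr ?G2)) T" by (rule IH'[OF _ ok3]) (use sub PA in auto)
        moreover have "PR ?G2 (Sign M K)" using mem_ac_PR[OF ok2 nSR(1) _ acS] by blast
        moreover have "PR ?G2 Rr" using mem_ac_PR[OF ok2 nSR(2) _ g2(3)] by blast
        ultimately have "PL ?G2 T" using rm2[OF szS szR] by blast
        then have "PL ?G1 T" using blind2_mem[OF _ sT[OF ok1] sideR] g1(1) g2(1) by blast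
        then show "PL \<Gamma> T" using ls_found[OF g(1,2,4)] by blast
      qed
      from rcut_ext[OF A blind2.hyps(2) sub] show ?thesis
      proof
        assume PRr: "PR \<Gamma> Rr"
        from provR_Sign[OF A[folded PA]] show ?thesis
        proof
          assume "\<exists>C\<in>ectx ar \<Gamma>. eqE pl R ?P C"
          from found[OF A[folded PA] this] obtain g where
            g: "guarded g" "\<exists>t\<in>\<Gamma>. subterm g t" "AC ?P g" "PR \<Gamma> g" "NF g" by auto
          then show ?thesis using routeX PA by blast
        next
          assume BK: "PR \<Gamma> (Blind M Rr) \<and> PR \<Gamma> K"
          have nM: "NF M" using nf_Sign[OF nSR(1)] by blast
          from provR_Blind[OF conjunct1[OF BK]] show ?thesis
          proof
            assume MR: "PR \<Gamma> M \<and> PR \<Gamma> Rr"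
            have "PR \<Gamma> (Sign M K)"
              using provR.signR[of ar pl R \<Gamma> M K] okG nSR(1) MR BK seq_ok_iff by blast
            moreover have ok: "OK (insert (Sign M K) (insert Rr \<Gamma>))" using okG nSR by (auto intro!: ctx_ok_insert)
            moreover have "PL (insert (Sign M K) (insert Rr \<Gamma>)) T" by (rule IH'[OF _ ok]) (use sub PA in auto)
            ultimately show ?thesis using rm2[OF szS szR] PRr by blast
          next
            assume "\<exists>C\<in>ectx ar \<Gamma>. eqE pl R (Blind M Rr) C"
            from found[OF conjunct1[OF BK] this] obtain g where
              g: "guarded g" "\<exists>t\<in>\<Gamma>. subterm g t" "AC (Blind M Rr) g" "PR \<Gamma> g" "NF g" by auto
            obtain M' R' where gg: "g = Blind M' R'" "AC M M'" "AC Rr R'"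
              using ac_eq_Blind[OF g(3)] by (elim exE conjE) simp
            have nM': "NF M'" "NF R'" using nf_Blind[OF g(5)[unfolded gg(1)]] by auto
            let ?G1 = "insert g \<Gamma>"
            let ?G2 = "insert M' (insert R' ?G1)"
            have ok1: "OK ?G1" using okG g(5) by (auto intro!: ctx_ok_insert)
            have ok2: "OK ?G2" using ok1 nM' by (auto intro!: ctx_ok_insert)
            have ok3: "OK (insert (Sign M K) (insert Rr ?G2))" using ok2 nSR by (auto intro!: ctx_ok_insert)
            have sideR: "PR ?G1 R'" using provR_ac[OF provR_weak[OF PRr _ ok1] gg(3)] by blast
            have "PR ?G2 M" using mem_ac_PR[OF ok2 nM _ gg(2)] by blast
            moreover have "PR ?G2 K" using provR_weak[OF conjunct2[OF BK] _ ok2] by blast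
            ultimately have "PR ?G2 (Sign M K)"
              using provR.signR[of ar pl R ?G2 M K] ok2 nSR(1) seq_ok_iff by blast
            moreover have "PR ?G2 Rr" using provR_weak[OF PRr _ ok2] by blast
            moreover have "PL (insert (Sign M K) (insert Rr ?G2)) T" by (rule IH'[OF _ ok3]) (use sub PA in auto)
            ultimately have "PL ?G2 T" using rm2[OF szS szR] by blast
            then have "PL ?G1 T" using blind1_mem[OF _ sT[OF ok1] sideR] gg(1) by blast
            then show ?thesis using ls_found[OF g(1,2,4)] by blast
          qed
        qed
      next
        assume "\<exists>g. guarded g \<and> AC g A \<and> (\<exists>t\<in>insert Rr \<Gamma>. subterm g t) \<and> PR \<Gamma> g \<and> PR (insert g \<Gamma>) Rr"
        then obtain g where g: "guarded g" "AC g A" "\<exists>t\<in>insert Rr \<Gamma>. subterm g t" "PR \<Gamma> g" by blast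
        have "\<not> subterm g Rr"
        proof
          assume "subterm g Rr"
          then have "size g \<le> size Rr" by (rule subterm_size)
          moreover have "size g = size A" using ac_eq_size[OF g(2)] .
          ultimately show False using szR by simp
        qed
        then have "\<exists>t\<in>\<Gamma>. subterm g t" using g(3) by blast
        then show ?thesis using routeX[OF g(1) _ ac_eq_sym[OF g(2)] g(4)] by blast
      qed
    qed
  qed
qed

lemma cutL: "PL \<Gamma> A \<Longrightarrow> PL (insert A \<Gamma>) T \<Longrightarrow> PL \<Gamma> T"
proof (induction arbitrary: T rule: provL.induct)
  case (r \<Gamma> M)
  then show ?case using core by blast
next
  case (lp M N \<Gamma> A T)
  have ok: "OK (insert A (insert (Pair M N) (insert M (insert N \<Gamma>))))"
    using provL_ok[OF lp.hyps(2)] provL_ok[OF lp.prems] unfolding seq_ok_def ctx_ok_def by auto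
  have "PL (insert A (insert (Pair M N) (insert M (insert N \<Gamma>)))) T"
    by (rule provL_weak[OF lp.prems _ ok]) auto
  then have "PL (insert (Pair M N) (insert M (insert N \<Gamma>))) T" using lp.IH by blast
  moreover have "seq_ok ar pl R (insert (Pair M N) \<Gamma>) T"
    using provL_ok[OF lp.prems] lp.hyps(1) unfolding seq_ok_def by auto
  ultimately show ?case using provL.lp by blast
next
  case (le M K \<Gamma> N T)
  have ok: "OK (insert N (insert (Enc M K) (insert M (insert K \<Gamma>))))"
    using provL_ok[OF le.hyps(3)] provL_ok[OF le.prems] unfolding seq_ok_def ctx_ok_def by auto
  have "PL (insert N (insert (Enc M K) (insert M (insert K \<Gamma>)))) T"
    by (rule provL_weak[OF le.prems _ ok]) auto
  then have "PL (insert (Enc M K) (insert M (insert K \<Gamma>))) T" using le.IH by blast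
  moreover have "seq_ok ar pl R (insert (Enc M K) \<Gamma>) T"
    using provL_ok[OF le.prems] le.hyps(1) unfolding seq_ok_def by auto
  ultimately show ?case using provL.le le.hyps(2) by blast
next
  case (sign M K L \<Gamma> N T)
  have ok: "OK (insert N (insert (Sign M K) (insert (Pub L) (insert M \<Gamma>))))"
    using provL_ok[OF sign.hyps(3)] provL_ok[OF sign.prems] unfolding seq_ok_def ctx_ok_def by auto
  have "PL (insert N (insert (Sign M K) (insert (Pub L) (insert M \<Gamma>)))) T"
    by (rule provL_weak[OF sign.prems _ ok]) auto
  then have "PL (insert (Sign M K) (insert (Pub L) (insert M \<Gamma>))) T" using sign.IH by blast
  moreover have "seq_ok ar pl R (insert (Sign M K) (insert (Pub L) \<Gamma>)) T"
    using provL_ok[OF sign.prems] sign.hyps(1) unfolding seq_ok_def by auto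
  ultimately show ?case using provL.sign sign.hyps(2) by blast
next
  case (blind1 M K \<Gamma> N T)
  have ok: "OK (insert N (insert (Blind M K) (insert M (insert K \<Gamma>))))"
    using provL_ok[OF blind1.hyps(3)] provL_ok[OF blind1.prems] unfolding seq_ok_def ctx_ok_def by auto
  have "PL (insert N (insert (Blind M K) (insert M (insert K \<Gamma>)))) T"
    by (rule provL_weak[OF blind1.prems _ ok]) auto
  then have "PL (insert (Blind M K) (insert M (insert K \<Gamma>))) T" using blind1.IH by blast
  moreover have "seq_ok ar pl R (insert (Blind M K) \<Gamma>) T"
    using provL_ok[OF blind1.prems] blind1.hyps(1) unfolding seq_ok_def by auto
  ultimately show ?case using provL.blind1 blind1.hyps(2) by blast
next
  case (blind2 M Rr K \<Gamma> N T)
  have ok: "OK (insert N (insert (Sign (Blind M Rr) K) (insert (Sign M K) (insert Rr \<Gamma>))))"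
    using provL_ok[OF blind2.hyps(3)] provL_ok[OF blind2.prems] unfolding seq_ok_def ctx_ok_def by auto
  have "PL (insert N (insert (Sign (Blind M Rr) K) (insert (Sign M K) (insert Rr \<Gamma>)))) T"
    by (rule provL_weak[OF blind2.prems _ ok]) auto
  then have "PL (insert (Sign (Blind M Rr) K) (insert (Sign M K) (insert Rr \<Gamma>))) T" using blind2.IH by blast
  moreover have "seq_ok ar pl R (insert (Sign (Blind M Rr) K) \<Gamma>) T"
    using provL_ok[OF blind2.prems] blind2.hyps(1) unfolding seq_ok_def by auto
  ultimately show ?case using provL.blind2 blind2.hyps(2) by blast
next
  case (ls \<Gamma> M A' T)
  have ok: "OK (insert M (insert A' \<Gamma>))"
    using provL_ok[OF ls.hyps(5)] provL_ok[OF ls.prems] unfolding seq_ok_def ctx_ok_def by auto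
  have "PL (insert M (insert A' \<Gamma>)) T"
    by (rule provL_weak[OF ls.prems _ ok]) auto
  then have "PL (insert A' \<Gamma>) T" using ls.IH by blast
  then show ?case using core[OF ls.hyps(4)] by blast
qed

lemma right_adm: "PL \<Gamma> M \<Longrightarrow> PL \<Gamma> N \<Longrightarrow> PR (insert N (insert M \<Gamma>)) X \<Longrightarrow> seq_ok ar pl R \<Gamma> X \<Longrightarrow> PL \<Gamma> X"
proof -
  assume a: "PL \<Gamma> M" "PL \<Gamma> N" "PR (insert N (insert M \<Gamma>)) X" "seq_ok ar pl R \<Gamma> X"
  have nM: "NF M" and nN: "NF N" using provL_ok[OF a(1)] provL_ok[OF a(2)] seq_ok_iff by blast+
  have okM: "OK (insert M \<Gamma>)" using a(4) nM seq_ok_iff ctx_ok_insert by blast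
  have "PL (insert N (insert M \<Gamma>)) X" using provL.r[OF provR_ok[OF a(3)] a(3)] .
  moreover have "PL (insert M \<Gamma>) N" using provL_weak[OF a(2) _ okM] by blast
  ultimately have "PL (insert M \<Gamma>) X" using cutL by blast
  then show ?thesis using cutL[OF a(1)] by blast
qed

lemma idmem: "OK \<Gamma> \<Longrightarrow> x \<in> \<Gamma> \<Longrightarrow> PR \<Gamma> x"
  using mem_ac_PR OK_mem ac_eq_refl by blast

lemma S_to_L: "provS ar pl R \<Gamma> M \<Longrightarrow> PL \<Gamma> M"
proof (induction rule: provS.induct)
  case (idS \<Gamma> M C) then show ?case by (blast intro: provL.r provR.idR)
next
  case (cut \<Gamma> T M) then show ?case using cutL by blast
next
  case (pL M N \<Gamma> T) then show ?case by (blast intro: provL.lp)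
next
  case (pR \<Gamma> M N)
  have ok: "OK (insert N (insert M \<Gamma>))" using provL_ok[OF pR.IH(1)] provL_ok[OF pR.IH(2)]
    unfolding seq_ok_def ctx_ok_def by auto
  have "PR (insert N (insert M \<Gamma>)) (Pair M N)"
  proof -
    have nP: "NF (Pair M N)" using pR.hyps(1) seq_ok_iff by blast
    show ?thesis by (rule provR.pR) (auto simp: seq_ok_iff ok nP intro: idmem[OF ok])
  qed
  then show ?case using right_adm[OF pR.IH _ pR.hyps(1)] by blast
next
  case (eR \<Gamma> M N)
  have ok: "OK (insert N (insert M \<Gamma>))" using provL_ok[OF eR.IH(1)] provL_ok[OF eR.IH(2)]
    unfolding seq_ok_def ctx_ok_def by auto
  have "PR (insert N (insert M \<Gamma>)) (Enc M N)"
  proof -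
    have nP: "NF (Enc M N)" using eR.hyps(1) seq_ok_iff by blast
    show ?thesis by (rule provR.eR) (auto simp: seq_ok_iff ok nP intro: idmem[OF ok])
  qed
  then show ?case using right_adm[OF eR.IH _ eR.hyps(1)] by blast
next
  case (signR \<Gamma> M N)
  have ok: "OK (insert N (insert M \<Gamma>))" using provL_ok[OF signR.IH(1)] provL_ok[OF signR.IH(2)]
    unfolding seq_ok_def ctx_ok_def by auto
  have "PR (insert N (insert M \<Gamma>)) (Sign M N)"
  proof -
    have nP: "NF (Sign M N)" using signR.hyps(1) seq_ok_iff by blast
    show ?thesis by (rule provR.signR) (auto simp: seq_ok_iff ok nP intro: idmem[OF ok])
  qed
  then show ?case using right_adm[OF signR.IH _ signR.hyps(1)] by blast
next
  case (blindR \<Gamma> M N)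
  have ok: "OK (insert N (insert M \<Gamma>))" using provL_ok[OF blindR.IH(1)] provL_ok[OF blindR.IH(2)]
    unfolding seq_ok_def ctx_ok_def by auto
  have "PR (insert N (insert M \<Gamma>)) (Blind M N)"
  proof -
    have nP: "NF (Blind M N)" using blindR.hyps(1) seq_ok_iff by blast
    show ?thesis by (rule provR.blindR) (auto simp: seq_ok_iff ok nP intro: idmem[OF ok])
  qed
  then show ?case using right_adm[OF blindR.IH _ blindR.hyps(1)] by blast
next
  case (eL M K \<Gamma> N)
  let ?G = "insert K (insert (Enc M K) \<Gamma>)"
  have ok: "OK ?G" using provL_ok[OF eL.IH(1)] provL_ok[OF eL.IH(2)] unfolding seq_ok_def ctx_ok_def by auto
  have "PL ?G N"
  proof (rule le_mem)
    show "Enc M K \<in> ?G" by simp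
    show "seq_ok ar pl R ?G N" using ok provL_ok[OF eL.IH(2)] seq_ok_iff by blast
    show "PR ?G K" using idmem[OF ok] by simp
    show "PL (insert M (insert K ?G)) N" using eL.IH(2) by (simp add: insert_commute)
  qed
  then show ?case using cutL[OF eL.IH(1)] by blast
next
  case (signL M K L \<Gamma> N) then show ?case by (blast intro: provL.sign)
next
  case (blindL1 M K \<Gamma> N)
  let ?G = "insert K (insert (Blind M K) \<Gamma>)"
  have ok: "OK ?G" using provL_ok[OF blindL1.IH(1)] provL_ok[OF blindL1.IH(2)] unfolding seq_ok_def ctx_ok_def by auto
  have "PL ?G N"
  proof (rule blind1_mem)
    show "Blind M K \<in> ?G" by simp
    show "seq_ok ar pl R ?G N" using ok provL_ok[OF blindL1.IH(2)] seq_ok_iff by blast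
    show "PR ?G K" using idmem[OF ok] by simp
    show "PL (insert M (insert K ?G)) N" using blindL1.IH(2) by (simp add: insert_commute)
  qed
  then show ?case using cutL[OF blindL1.IH(1)] by blast
next
  case (blindL2 M Rr K \<Gamma> N)
  let ?G = "insert Rr (insert (Sign (Blind M Rr) K) \<Gamma>)"
  have ok: "OK ?G" using provL_ok[OF blindL2.IH(1)] provL_ok[OF blindL2.IH(2)] unfolding seq_ok_def ctx_ok_def by auto
  have "PL ?G N"
  proof (rule blind2_mem)
    show "Sign (Blind M Rr) K \<in> ?G" by simp
    show "seq_ok ar pl R ?G N" using ok provL_ok[OF blindL2.IH(2)] seq_ok_iff by blast
    show "PR ?G Rr" using idmem[OF ok] by simp
    show "PL (insert (Sign M K) (insert Rr ?G)) N" using blindL2.IH(2) by (simp add: insert_commute)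
  qed
  then show ?case using cutL[OF blindL2.IH(1)] by blast
next
  case (gs \<Gamma> M A) then show ?case using cutL by blast
qed

end

lemma R_to_S: "provR ar pl R \<Gamma> M \<Longrightarrow> provS ar pl R \<Gamma> M"
  by (induction rule: provR.induct) (auto intro: provS.intros)

lemma L_to_S: "provL ar pl R \<Gamma> M \<Longrightarrow> provS ar pl R \<Gamma> M"
  by (induction rule: provL.induct) (auto intro: provS.intros R_to_S)

theorem proposition5:
  fixes ar :: "'f \<Rightarrow> nat" and pl :: "'f option" and R :: "('f etrm \<times> 'f etrm) set"
    and \<Gamma> :: "'f trm set" and M :: "'f trm"
  assumes "good_theory ar pl R"
  shows "provS ar pl R \<Gamma> M \<longleftrightarrow> provL ar pl R \<Gamma> M"
  using S_to_L[OF assms] L_to_S by blast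


end
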